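(* Let $X\ge H_2\ge H_1\ge X^{1/4}\ge2$. (i) $\max_{a,q\in\mathbb N}\Big|\frac{1}{H_1}\sum_{X<n\le X+H_1,\ n\equiv a\ (q)}\Lambda^\sharp(n)-\frac{1}{H_2}\sum_{X<n\le X+H_2,\ n\equiv a\ (q)}\Lambda^\sharp(n)\Big|\ll\exp(-(\log X)^{1/10})$. (ii) Let $k\ge2$. Then $\max_{a,q\in\mathbb N}\Big|\frac{1}{H_1}\sum_{X<n\le X+H_1,\ n\equiv a\ (q)}d_k^\sharp(n)-\frac{1}{H_2}\sum_{X<n\le X+H_2,\ n\equiv a\ (q)}d_k^\sharp(n)\Big|\ll X^{-1/100}+\frac{H_2}{X}\log^{k-2}X$.
   Context: With $P(w)=\prod_{p<w}p$, $R=\exp((\log X)^{1/10})$, $\Lambda^\sharp(n)=\frac{P(R)}{\varphi(P(R))}1_{(n,P(R))=1}$. With $R_k=X^{1/(10k)}$, $d_k^\sharp(n)=\sum_{m\le R_k^{2k-2},\,m\mid n}P_m(\log n)$ where $P_m(t)=\sum_{j=0}^{k-1}\binom{k}{j}\sum_{n_1,\dots,n_j\le R_k<n_{j+1},\dots,n_{k-1}\le R_k^2,\ n_1\cdots n_{k-1}=m}\frac{(t-\log(n_1\cdots n_jR_k^{k-j}))^{k-j-1}}{(k-j-1)!\log^{k-j-1}R_k}$. Implied constants may depend on $k$. *)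

theory Defs
  imports "HOL-Number_Theory.Number_Theory" "HOL-Library.FuncSet"
begin

definition primorial_lt :: "real \<Rightarrow> nat" where
  "primorial_lt w = \<Prod>{p::nat. prime p \<and> real p < w}"

definition R_sharp :: "real \<Rightarrow> real" where
  "R_sharp X = exp (ln X powr (1/10))"

definition Lambda_sharp :: "real \<Rightarrow> nat \<Rightarrow> real" where
  "Lambda_sharp X n =
     (if coprime n (primorial_lt (R_sharp X))
      then real (primorial_lt (R_sharp X)) / real (totient (primorial_lt (R_sharp X)))
      else 0)"

definition R_k :: "nat \<Rightarrow> real \<Rightarrow> real" where
  "R_k k X = X powr (1 / (10 * real k))"

text \<open>P_m(t); tuples (n_1,...,n_{k-1}) are indexed by 0..k-2 (n_{i+1} = ns i)\<close>
definition P_poly :: "nat \<Rightarrow> real \<Rightarrow> nat \<Rightarrow> real \<Rightarrow> real" where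
  "P_poly k X m t =
     (\<Sum>j = 0..k-1. real (k choose j) *
        (\<Sum>ns \<in> {ns \<in> {0..<k-1} \<rightarrow>\<^sub>E {1..m}.
                    (\<Prod>i<k-1. ns i) = m \<and>
                    (\<forall>i<j. real (ns i) \<le> R_k k X) \<and>
                    (\<forall>i\<in>{j..<k-1}. R_k k X < real (ns i) \<and> real (ns i) \<le> (R_k k X)^2)}.
           (t - ln ((\<Prod>i<j. real (ns i)) * (R_k k X) ^ (k - j))) ^ (k - j - 1)
           / (fact (k - j - 1) * (ln (R_k k X)) ^ (k - j - 1))))"

definition dk_sharp :: "nat \<Rightarrow> real \<Rightarrow> nat \<Rightarrow> real" where
  "dk_sharp k X n =
     (\<Sum>m \<in> {m::nat. 1 \<le> m \<and> real m \<le> (R_k k X) ^ (2*k - 2) \<and> m dvd n}.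
        P_poly k X m (ln (real n)))"

definition win_avg :: "(nat \<Rightarrow> real) \<Rightarrow> real \<Rightarrow> real \<Rightarrow> nat \<Rightarrow> nat \<Rightarrow> real" where
  "win_avg f X H a q =
     (1 / H) * (\<Sum>n \<in> {n::nat. X < real n \<and> real n \<le> X + H \<and> [n = a] (mod q)}. f n)"

end

theory Submission
  imports Defs
begin

lemma set_nat_le_real: "{t::nat. real t \<le> z} = {..<nat (\<lfloor>z\<rfloor> + 1)}"
proof -
  have "real t \<le> z \<longleftrightarrow> t < nat (\<lfloor>z\<rfloor> + 1)" for t :: nat
  proof -
    have "real t \<le> z \<longleftrightarrow> int t \<le> \<lfloor>z\<rfloor>"
      by (metis le_floor_iff of_int_of_nat_eq)
    also have "\<dots> \<longleftrightarrow> t < nat (\<lfloor>z\<rfloor> + 1)" by linarith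
    finally show ?thesis .
  qed
  then show ?thesis by auto
qed

lemma card_nat_le_real: "card {t::nat. real t \<le> z} = nat (\<lfloor>z\<rfloor> + 1)"
  by (simp add: set_nat_le_real)

lemma win_count:
  fixes L r :: nat and x H :: real
  assumes L: "L \<ge> 1" and r: "r < L" and x: "x \<ge> 0" and H: "H \<ge> 0"
  shows "\<bar>real (card {n::nat. x < real n \<and> real n \<le> x + H \<and> n mod L = r}) - H / L\<bar> \<le> 1"
proof -
  define a where "a = (x - r) / L"
  define b where "b = (x + H - r) / L"
  have Lp: "real L > 0" using L by simp
  have ab: "a \<le> b" unfolding a_def b_def using H Lp by (simp add: divide_right_mono)
  have am: "a > -1" unfolding a_def using r x Lp by (simp add: field_simps)
  have ba: "b - a = H / L" unfolding a_def b_def using Lp by (simp add: field_simps)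
  define T where "T = {t::nat. a < real t \<and> real t \<le> b}"
  have eqS: "{n::nat. x < real n \<and> real n \<le> x + H \<and> n mod L = r} = (\<lambda>t. r + L * t) ` T"
  proof (rule equalityI; rule subsetI)
    fix n assume "n \<in> {n::nat. x < real n \<and> real n \<le> x + H \<and> n mod L = r}"
    then have n: "x < real n" "real n \<le> x + H" "n mod L = r" by auto
    have nd: "n = r + L * (n div L)" using n(3) div_mult_mod_eq[of n L] by (simp add: mult.commute add.commute)
    have rn: "real n = r + L * real (n div L)" using arg_cong[OF nd, of real] by simp
    have "a < real (n div L)" unfolding a_def using n(1) rn Lp by (simp add: field_simps)
    moreover have "real (n div L) \<le> b" unfolding b_def using n(2) rn Lp by (simp add: field_simps)
    ultimately show "n \<in> (\<lambda>t. r + L * t) ` T" unfolding T_def using nd by blast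
  next
    fix n assume "n \<in> (\<lambda>t. r + L * t) ` T"
    then obtain t where t: "a < real t" "real t \<le> b" "n = r + L * t" unfolding T_def by auto
    have "x < real n" using t(1,3) Lp unfolding a_def by (simp add: field_simps)
    moreover have "real n \<le> x + H" using t(2,3) Lp unfolding b_def by (simp add: field_simps)
    moreover have "n mod L = r" using t(3) r by simp
    ultimately show "n \<in> {n::nat. x < real n \<and> real n \<le> x + H \<and> n mod L = r}" by simp
  qed
  have inj: "inj_on (\<lambda>t. r + L * t) T" using L by (auto simp: inj_on_def)
  have T2: "T = {t::nat. real t \<le> b} - {t::nat. real t \<le> a}" unfolding T_def by auto
  have sub: "{t::nat. real t \<le> a} \<subseteq> {t::nat. real t \<le> b}" using ab by auto
  have fin: "finite {t::nat. real t \<le> a}"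
    by (simp add: set_nat_le_real) 
  have cT: "card T = nat (\<lfloor>b\<rfloor> + 1) - nat (\<lfloor>a\<rfloor> + 1)"
    unfolding T2 using card_Diff_subset[OF fin sub] card_nat_le_real by simp
  have fa: "\<lfloor>a\<rfloor> \<ge> -1" using am by linarith
  have fab: "\<lfloor>a\<rfloor> \<le> \<lfloor>b\<rfloor>" using ab floor_mono by blast
  have "real (card T) = real_of_int (\<lfloor>b\<rfloor> - \<lfloor>a\<rfloor>)" using cT fa fab by simp
  moreover have "real_of_int (\<lfloor>b\<rfloor> - \<lfloor>a\<rfloor>) \<le> b - a + 1" 
    using of_int_floor_le[of b] real_of_int_floor_gt_diff_one[of a] by linarith
  moreover have "real_of_int (\<lfloor>b\<rfloor> - \<lfloor>a\<rfloor>) \<ge> b - a - 1" 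
    using of_int_floor_le[of a] real_of_int_floor_gt_diff_one[of b] by linarith
  ultimately have "\<bar>real (card T) - H / L\<bar> \<le> 1" using ba by (simp add: abs_le_iff)
  then show ?thesis using eqS card_image[OF inj] by simp
qed

lemma count_AP:
  fixes q m a :: nat
  assumes q: "q \<ge> 1" and m: "m \<ge> 1"
  shows "\<exists>c::real. 0 \<le> c \<and> c \<le> 1 / real m \<and> (\<forall>x H. x \<ge> 0 \<longrightarrow> H \<ge> 0 \<longrightarrow>
     \<bar>real (card {n::nat. x < real n \<and> real n \<le> x + H \<and> [n = a] (mod q) \<and> m dvd n}) - c * H\<bar> \<le> 1)"
proof (cases "\<exists>n0. [n0 = a] (mod q) \<and> m dvd n0")
  case True
  then obtain n0 where n0: "[n0 = a] (mod q)" "m dvd n0" by blast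
  define L where "L = lcm q m"
  have L1: "L \<ge> 1" using q m unfolding L_def by (simp add: lcm_pos_nat Suc_le_eq)
  have mL: "m \<le> L" unfolding L_def using L1 L_def by (simp add: dvd_imp_le)
  have eq: "([n = a] (mod q) \<and> m dvd n) \<longleftrightarrow> n mod L = n0 mod L" for n
  proof
    assume h: "[n = a] (mod q) \<and> m dvd n"
    have "[n = n0] (mod q)" using h n0 by (meson cong_sym cong_trans)
    moreover have "[n = n0] (mod m)" using h n0 by (simp add: cong_def)
    ultimately have "[n = n0] (mod L)" unfolding L_def by (rule cong_cong_lcm_nat)
    then show "n mod L = n0 mod L" by (simp add: cong_def)
  next
    assume h: "n mod L = n0 mod L"
    then have c: "[n = n0] (mod L)" by (simp add: cong_def)
    have "[n = n0] (mod q)" using cong_dvd_modulus_nat[OF c] unfolding L_def by simp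
    then have "[n = a] (mod q)" using n0 by (meson cong_trans)
    moreover have "[n = n0] (mod m)" using cong_dvd_modulus_nat[OF c] unfolding L_def by simp
    then have "m dvd n" using n0 cong_dvd_iff by blast
    ultimately show "[n = a] (mod q) \<and> m dvd n" by simp
  qed
  show ?thesis
  proof (intro exI[of _ "1 / real L"] conjI allI impI)
    show "0 \<le> 1 / real L" by simp
    show "1 / real L \<le> 1 / real m" using mL m by (simp add: frac_le)
    fix x H :: real assume x: "x \<ge> 0" and H: "H \<ge> 0"
    have "{n::nat. x < real n \<and> real n \<le> x + H \<and> [n = a] (mod q) \<and> m dvd n}
        = {n::nat. x < real n \<and> real n \<le> x + H \<and> n mod L = n0 mod L}" using eq by blast
    moreover have "n0 mod L < L" using L1 by simp
    ultimately show "\<bar>real (card {n::nat. x < real n \<and> real n \<le> x + H \<and> [n = a] (mod q) \<and> m dvd n}) - 1 / real L * H\<bar> \<le> 1"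
      using win_count[OF L1 _ x H, of "n0 mod L"] by simp
  qed
next
  case False
  then have E: "{n::nat. x < real n \<and> real n \<le> x + H \<and> [n = a] (mod q) \<and> m dvd n} = {}" for x H by blast
  show ?thesis apply (rule exI[of _ 0]) apply (simp only: E) by simp
qed

lemma alt_choose_sum:
  assumes "m \<ge> 1"
  shows "(\<Sum>i\<le>K. (-1::real) ^ i * real (m choose i)) = (-1) ^ K * real ((m - 1) choose K)"
proof (induction K)
  case 0 then show ?case by simp
next
  case (Suc K)
  obtain m' where m': "m = Suc m'" using assms by (cases m) auto
  have "(m choose Suc K) = (m' choose K) + (m' choose Suc K)" using m' by simp
  then show ?case using Suc m' by (simp add: algebra_simps)
qed

lemma sum_subsets_card:
  assumes "finite S"
  shows "(\<Sum>B\<in>{B. B \<subseteq> S \<and> card B \<le> K}. (-1::real) ^ card B) = (\<Sum>i\<le>K. (-1) ^ i * real (card S choose i))"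
proof -
  have eq: "{B. B \<subseteq> S \<and> card B \<le> K} = (\<Union>i\<in>{..K}. {B. B \<subseteq> S \<and> card B = i})" by auto
  have fin: "\<forall>i\<in>{..K}. finite {B. B \<subseteq> S \<and> card B = i}" using assms by auto
  have "(\<Sum>B\<in>{B. B \<subseteq> S \<and> card B \<le> K}. (-1::real) ^ card B)
      = (\<Sum>i\<le>K. \<Sum>B\<in>{B. B \<subseteq> S \<and> card B = i}. (-1::real) ^ card B)"
    unfolding eq by (rule sum.UNION_disjoint) (use fin in auto)
  also have "\<dots> = (\<Sum>i\<le>K. \<Sum>B\<in>{B. B \<subseteq> S \<and> card B = i}. (-1::real) ^ i)"
    by (intro sum.cong) auto
  also have "\<dots> = (\<Sum>i\<le>K. (-1) ^ i * real (card S choose i))"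
    using n_subsets[OF assms] by (simp add: mult.commute)
  finally show ?thesis .
qed

lemma sieve_pointwise:
  assumes "finite D"
  shows "\<bar>(if D = {} then 1 else 0) - (\<Sum>B\<in>{B. B \<subseteq> D \<and> card B \<le> K}. (-1::real) ^ card B)\<bar>
         \<le> real (card {B. B \<subseteq> D \<and> card B = Suc K})"
proof (cases "D = {}")
  case True
  then have "{B. B \<subseteq> D \<and> card B \<le> K} = {{}}" by auto
  then show ?thesis using True by simp
next
  case False
  then have m: "card D \<ge> 1" using assms by (simp add: Suc_le_eq card_gt_0_iff)
  have "\<bar>(if D = {} then 1 else 0) - (\<Sum>B\<in>{B. B \<subseteq> D \<and> card B \<le> K}. (-1::real) ^ card B)\<bar>
      = real ((card D - 1) choose K)"
    using False sum_subsets_card[OF assms, of K] alt_choose_sum[OF m, of K] by (simp add: abs_mult)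
  also have "\<dots> \<le> real (card D choose Suc K)"
  proof -
    obtain m' where "card D = Suc m'" using m by (cases "card D") auto
    then show ?thesis by simp
  qed
  also have "\<dots> = real (card {B. B \<subseteq> D \<and> card B = Suc K})" using n_subsets[OF assms] by simp
  finally show ?thesis .
qed

lemma sieve_pointwise_A:
  assumes "finite A" "D \<subseteq> A"
  shows "\<bar>(if D = {} then 1 else 0) - (\<Sum>B\<in>{B. B \<subseteq> A \<and> card B \<le> K}. if B \<subseteq> D then (-1::real) ^ card B else 0)\<bar>
         \<le> (\<Sum>B\<in>{B. B \<subseteq> A \<and> card B = Suc K}. if B \<subseteq> D then 1 else (0::real))"
proof -
  have fD: "finite D" using assms finite_subset by blast
  have fA1: "finite {B. B \<subseteq> A \<and> card B \<le> K}" using assms by auto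
  have fA2: "finite {B. B \<subseteq> A \<and> card B = Suc K}" using assms by auto
  have e1: "(\<Sum>B\<in>{B. B \<subseteq> A \<and> card B \<le> K}. if B \<subseteq> D then (-1::real) ^ card B else 0)
      = (\<Sum>B\<in>{B. B \<subseteq> D \<and> card B \<le> K}. (-1::real) ^ card B)"
  proof -
    have "{B \<in> {B. B \<subseteq> A \<and> card B \<le> K}. B \<subseteq> D} = {B. B \<subseteq> D \<and> card B \<le> K}" using assms by auto
    then show ?thesis using sum.inter_filter[OF fA1, of "\<lambda>B. (-1::real) ^ card B" "\<lambda>B. B \<subseteq> D"] by simp
  qed
  have e2: "(\<Sum>B\<in>{B. B \<subseteq> A \<and> card B = Suc K}. if B \<subseteq> D then 1 else (0::real))
      = real (card {B. B \<subseteq> D \<and> card B = Suc K})"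
  proof -
    have "{B \<in> {B. B \<subseteq> A \<and> card B = Suc K}. B \<subseteq> D} = {B. B \<subseteq> D \<and> card B = Suc K}" using assms by auto
    then show ?thesis using sum.inter_filter[OF fA2, of "\<lambda>B. (1::real)" "\<lambda>B. B \<subseteq> D"] by simp
  qed
  show ?thesis unfolding e1 e2 by (rule sieve_pointwise[OF fD])
qed

lemma card_subsets_le:
  assumes "finite A"
  shows "card {B. B \<subseteq> A \<and> card B \<le> j} \<le> (card A + 1) ^ j"
proof (induction j)
  case 0
  have "{B. B \<subseteq> A \<and> card B \<le> 0} = {{}}" using assms by (auto simp: card_eq_0_iff dest: finite_subset)
  then show ?case by simp
next
  case (Suc j)
  have sub: "{B. B \<subseteq> A \<and> card B \<le> Suc j} \<subseteq> {B. B \<subseteq> A \<and> card B \<le> j} \<union> (\<Union>a\<in>A. insert a ` {B. B \<subseteq> A \<and> card B \<le> j})"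
  proof
    fix B assume B: "B \<in> {B. B \<subseteq> A \<and> card B \<le> Suc j}"
    show "B \<in> {B. B \<subseteq> A \<and> card B \<le> j} \<union> (\<Union>a\<in>A. insert a ` {B. B \<subseteq> A \<and> card B \<le> j})"
    proof (cases "card B \<le> j")
      case True then show ?thesis using B by auto
    next
      case False
      then have "B \<noteq> {}" by auto
      then obtain a where a: "a \<in> B" by auto
      have fB: "finite B" using B assms finite_subset by blast
      have "card (B - {a}) \<le> j" using B False a fB by (simp add: card_Diff_singleton del: One_nat_def) linarith
      moreover have "B = insert a (B - {a})" using a by auto
      ultimately show ?thesis using B a by blast
    qed
  qed
  have fin: "finite {B. B \<subseteq> A \<and> card B \<le> j}" using assms by auto
  have "card {B. B \<subseteq> A \<and> card B \<le> Suc j} \<le> card ({B. B \<subseteq> A \<and> card B \<le> j} \<union> (\<Union>a\<in>A. insert a ` {B. B \<subseteq> A \<and> card B \<le> j}))"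
    by (rule card_mono) (use assms fin sub in auto)
  also have "\<dots> \<le> card {B. B \<subseteq> A \<and> card B \<le> j} + card (\<Union>a\<in>A. insert a ` {B. B \<subseteq> A \<and> card B \<le> j})"
    by (rule card_Un_le)
  also have "card (\<Union>a\<in>A. insert a ` {B. B \<subseteq> A \<and> card B \<le> j}) \<le> (\<Sum>a\<in>A. card (insert a ` {B. B \<subseteq> A \<and> card B \<le> j}))"
    by (rule card_UN_le[OF assms])
  also have "\<dots> \<le> (\<Sum>a\<in>A. card {B. B \<subseteq> A \<and> card B \<le> j})"
    by (intro sum_mono card_image_le fin)
  finally have "card {B. B \<subseteq> A \<and> card B \<le> Suc j} \<le> (card A + 1) * card {B. B \<subseteq> A \<and> card B \<le> j}" by simp
  also have "\<dots> \<le> (card A + 1) * (card A + 1) ^ j" using Suc by (intro mult_left_mono) auto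
  finally show ?case by simp
qed

lemma rankin:
  fixes A :: "nat set"
  assumes "finite A" "\<And>p. p \<in> A \<Longrightarrow> p > 0"
  shows "(\<Sum>B\<in>{B. B \<subseteq> A \<and> card B = j}. 1 / real (\<Prod>B)) \<le> (1/2) ^ j * (\<Prod>p\<in>A. 1 + 2 / real p)"
proof -
  have "(\<Sum>B\<in>{B. B \<subseteq> A \<and> card B = j}. 1 / real (\<Prod>B))
      = (\<Sum>B\<in>{B. B \<subseteq> A \<and> card B = j}. (1/2) ^ j * (\<Prod>p\<in>B. 2 / real p))"
  proof (intro sum.cong refl)
    fix B assume B: "B \<in> {B. B \<subseteq> A \<and> card B = j}"
    have "(\<Prod>p\<in>B. 2 / real p) = 2 ^ card B / (\<Prod>p\<in>B. real p)" by (simp add: prod_dividef)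
    then show "1 / real (\<Prod>B) = (1/2) ^ j * (\<Prod>p\<in>B. 2 / real p)" using B
      by (simp add: power_one_over)
  qed
  also have "\<dots> = (1/2) ^ j * (\<Sum>B\<in>{B. B \<subseteq> A \<and> card B = j}. (\<Prod>p\<in>B. 2 / real p))"
    by (simp add: sum_distrib_left)
  also have "\<dots> \<le> (1/2) ^ j * (\<Sum>B\<in>Pow A. (\<Prod>p\<in>B. 2 / real p))"
    by (intro mult_left_mono sum_mono2) (use assms in \<open>auto intro: prod_nonneg\<close>)
  also have "(\<Sum>B\<in>Pow A. (\<Prod>p\<in>B. 2 / real p)) = (\<Prod>p\<in>A. 2 / real p + 1)"
    using prod_add[OF assms(1), of "\<lambda>p. 2 / real p" "\<lambda>p. 1"] by simp
  finally show ?thesis by (simp add: add.commute)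
qed

lemma coprime_prod_primes:
  fixes A :: "nat set"
  assumes "finite A" "\<And>p. p \<in> A \<Longrightarrow> prime p"
  shows "coprime n (\<Prod>A) \<longleftrightarrow> {p\<in>A. p dvd n} = {}"
proof
  assume c: "coprime n (\<Prod>A)"
  show "{p\<in>A. p dvd n} = {}"
  proof (rule ccontr)
    assume "{p\<in>A. p dvd n} \<noteq> {}"
    then obtain p where p: "p \<in> A" "p dvd n" by auto
    have "p dvd \<Prod>A" using dvd_prodI[of A p "\<lambda>x. x"] p assms by simp
    then have "is_unit p" using c p by (meson coprime_common_divisor)
    then show False using assms(2)[OF p(1)] by (simp add: not_prime_unit)
  qed
next
  assume e: "{p\<in>A. p dvd n} = {}"
  show "coprime n (\<Prod>A)"
  proof (rule prod_coprime_right)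
    fix p assume "p \<in> A"
    then have "prime p" "\<not> p dvd n" using e assms by auto
    then show "coprime n p" using prime_imp_coprime coprime_commute by blast
  qed
qed

lemma prod_primes_dvd_iff:
  fixes B :: "nat set"
  assumes "finite B" "\<And>p. p \<in> B \<Longrightarrow> prime p"
  shows "(\<Prod>B) dvd n \<longleftrightarrow> (\<forall>p\<in>B. p dvd n)"
  using assms
proof (induction B rule: finite_induct)
  case empty then show ?case by simp
next
  case (insert p B)
  have cop: "coprime p (\<Prod>B)"
  proof (rule prod_coprime_right)
    fix r assume "r \<in> B"
    then have "prime r" "prime p" "r \<noteq> p" using insert by auto
    then show "coprime p r" by (simp add: primes_coprime)
  qed
  have "(\<Prod>(insert p B)) = p * \<Prod>B" using insert by simp
  then show ?case using insert cop
    by (metis divides_mult dvd_mult_left dvd_mult_right insert_iff)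
qed

lemma totient_prod_primes:
  fixes A :: "nat set"
  assumes "finite A" "\<And>p. p \<in> A \<Longrightarrow> prime p"
  shows "real (\<Prod>A) / real (totient (\<Prod>A)) = (\<Prod>p\<in>A. real p / (real p - 1))"
proof -
  have "totient (\<Prod>A) = (\<Prod>p\<in>A. totient p)"
    using totient_prod_coprime[of id A] assms
    by (simp add: pairwise_def primes_coprime)
  also have "\<dots> = (\<Prod>p\<in>A. p - 1)" using assms by (intro prod.cong) (auto simp: totient_prime)
  finally have "real (totient (\<Prod>A)) = (\<Prod>p\<in>A. real (p - 1))"
    by (simp add: of_nat_prod)
  also have "\<dots> = (\<Prod>p\<in>A. real p - 1)"
  proof (intro prod.cong refl)
    fix p assume "p \<in> A"
    then have "p \<ge> 1" using assms prime_ge_1_nat by blast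
    then show "real (p - 1) = real p - 1" by (simp add: of_nat_diff)
  qed
  finally have t: "real (totient (\<Prod>A)) = (\<Prod>p\<in>A. real p - 1)" .
  show ?thesis unfolding t by (simp add: of_nat_prod prod_dividef)
qed

lemma telescope1: "(\<Prod>n\<in>{2..N}. real n / (real n - 1)) = max 1 (real N)"
proof (induction N)
  case 0 then show ?case by simp
next
  case (Suc N)
  show ?case
  proof (cases "N = 0")
    case True then show ?thesis by simp
  next
    case False
    have "{2..Suc N} = insert (Suc N) {2..N}" using False by auto
    then have "(\<Prod>n\<in>{2..Suc N}. real n / (real n - 1)) = (real (Suc N) / real N) * (\<Prod>n\<in>{2..N}. real n / (real n - 1))"
      by simp
    then show ?thesis using Suc False by simp
  qed
qed

lemma telescope2: "(\<Prod>n\<in>{2..N}. 1 + 2 / real n) \<le> (real N + 1) ^ 2"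
proof -
  have eq: "(\<Prod>n\<in>{2..N}. 1 + 2 / real n) = (real N + 1) * (real N + 2) / 6" if "N \<ge> 1" for N
    using that
  proof (induction N rule: dec_induct)
    case base then show ?case by simp
  next
    case (step N)
    have "{2..Suc N} = insert (Suc N) {2..N}" using step by auto
    then have "(\<Prod>n\<in>{2..Suc N}. 1 + 2 / real n) = (1 + 2 / real (Suc N)) * (\<Prod>n\<in>{2..N}. 1 + 2 / real n)"
      by simp
    then show ?case using step by (simp add: field_simps)
  qed
  show ?thesis
  proof (cases "N = 0")
    case True then show ?thesis by simp
  next
    case False
    then have "(\<Prod>n\<in>{2..N}. 1 + 2 / real n) = (real N + 1) * (real N + 2) / 6" using eq by simp
    also have "\<dots> \<le> (real N + 1) ^ 2" by (simp add: power2_eq_square field_simps)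
    finally show ?thesis .
  qed
qed

lemma prod_sub_interval:
  fixes A :: "nat set" and g :: "nat \<Rightarrow> real"
  assumes "A \<subseteq> {2..N}" "\<And>n. n \<in> {2..N} \<Longrightarrow> g n \<ge> 1"
  shows "(\<Prod>p\<in>A. g p) \<le> (\<Prod>n\<in>{2..N}. g n)"
proof (rule prod_mono2)
  fix a assume "a \<in> A"
  then have "a \<in> {2..N}" using assms by auto
  then have "g a \<ge> 1" using assms(2) by blast
  then show "0 \<le> g a" by simp
qed (use assms in auto)

lemma window_sieve:
  fixes f :: "nat \<Rightarrow> real" and s c u :: "'b \<Rightarrow> real" and ind :: "'b \<Rightarrow> nat \<Rightarrow> bool"
  assumes fin: "finite W" "finite G" "finite E"
    and s: "\<And>B. B \<in> G \<Longrightarrow> \<bar>s B\<bar> \<le> 1"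
    and pw: "\<And>n. n \<in> W \<Longrightarrow> \<bar>f n - (\<Sum>B\<in>G. if ind B n then s B else 0)\<bar> \<le> (\<Sum>B\<in>E. if ind B n then 1 else 0)"
    and cnt: "\<And>B. B \<in> G \<union> E \<Longrightarrow> \<bar>real (card {n\<in>W. ind B n}) - c B * H\<bar> \<le> 1"
    and cu: "\<And>B. B \<in> E \<Longrightarrow> c B \<le> u B"
    and H: "H > 0"
  shows "\<bar>(1/H) * (\<Sum>n\<in>W. f n) - (\<Sum>B\<in>G. s B * c B)\<bar> \<le> (real (card G) + real (card E)) / H + (\<Sum>B\<in>E. u B)"
proof -
  have ind_sum: "(\<Sum>n\<in>W. if ind B n then v else 0) = v * real (card {n\<in>W. ind B n})" for B v
    using sum.inter_filter[OF fin(1), of "\<lambda>_. v" "ind B"] by (simp add: mult.commute)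
  have S: "(\<Sum>n\<in>W. \<Sum>B\<in>G. if ind B n then s B else 0) = (\<Sum>B\<in>G. s B * real (card {n\<in>W. ind B n}))"
    by (subst sum.swap) (simp add: ind_sum)
  have T: "(\<Sum>n\<in>W. \<Sum>B\<in>E. if ind B n then 1 else (0::real)) = (\<Sum>B\<in>E. real (card {n\<in>W. ind B n}))"
    by (subst sum.swap) (simp add: ind_sum)
  have "\<bar>(\<Sum>n\<in>W. f n) - (\<Sum>n\<in>W. \<Sum>B\<in>G. if ind B n then s B else 0)\<bar>
       \<le> (\<Sum>n\<in>W. \<bar>f n - (\<Sum>B\<in>G. if ind B n then s B else 0)\<bar>)"
    by (subst sum_subtractf[symmetric]) (rule sum_abs)
  also have "\<dots> \<le> (\<Sum>n\<in>W. \<Sum>B\<in>E. if ind B n then 1 else (0::real))" by (intro sum_mono pw)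
  finally have 1: "\<bar>(\<Sum>n\<in>W. f n) - (\<Sum>B\<in>G. s B * real (card {n\<in>W. ind B n}))\<bar> \<le> (\<Sum>B\<in>E. real (card {n\<in>W. ind B n}))"
    unfolding S T .
  have "\<bar>(\<Sum>B\<in>G. s B * real (card {n\<in>W. ind B n})) - H * (\<Sum>B\<in>G. s B * c B)\<bar>
      = \<bar>\<Sum>B\<in>G. s B * (real (card {n\<in>W. ind B n}) - c B * H)\<bar>"
  proof -
    have "H * (\<Sum>B\<in>G. s B * c B) = (\<Sum>B\<in>G. s B * (c B * H))"
      by (simp add: sum_distrib_left mult.commute mult.left_commute)
    then show ?thesis by (simp add: sum_subtractf[symmetric] right_diff_distrib)
  qed
  also have "\<dots> \<le> (\<Sum>B\<in>G. \<bar>s B * (real (card {n\<in>W. ind B n}) - c B * H)\<bar>)" by (rule sum_abs)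
  also have "\<dots> \<le> (\<Sum>B\<in>G. 1)"
  proof (intro sum_mono)
    fix B assume B: "B \<in> G"
    have "\<bar>s B * (real (card {n\<in>W. ind B n}) - c B * H)\<bar> = \<bar>s B\<bar> * \<bar>real (card {n\<in>W. ind B n}) - c B * H\<bar>"
      by (simp add: abs_mult)
    also have "\<dots> \<le> 1 * 1" using s[OF B] cnt[of B] B by (intro mult_mono) auto
    finally show "\<bar>s B * (real (card {n\<in>W. ind B n}) - c B * H)\<bar> \<le> 1" by simp
  qed
  finally have 2: "\<bar>(\<Sum>B\<in>G. s B * real (card {n\<in>W. ind B n})) - H * (\<Sum>B\<in>G. s B * c B)\<bar> \<le> real (card G)" by simp
  have "(\<Sum>B\<in>E. real (card {n\<in>W. ind B n})) \<le> (\<Sum>B\<in>E. u B * H + 1)"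
  proof (intro sum_mono)
    fix B assume B: "B \<in> E"
    have "real (card {n\<in>W. ind B n}) \<le> c B * H + 1" using cnt[of B] B by auto
    also have "\<dots> \<le> u B * H + 1" using cu[OF B] H by (simp add: mult_right_mono)
    finally show "real (card {n\<in>W. ind B n}) \<le> u B * H + 1" .
  qed
  also have "\<dots> = H * (\<Sum>B\<in>E. u B) + real (card E)" by (simp add: sum.distrib sum_distrib_left mult.commute)
  finally have 3: "(\<Sum>B\<in>E. real (card {n\<in>W. ind B n})) \<le> H * (\<Sum>B\<in>E. u B) + real (card E)" .
  have "\<bar>(\<Sum>n\<in>W. f n) - H * (\<Sum>B\<in>G. s B * c B)\<bar> \<le> real (card G) + real (card E) + H * (\<Sum>B\<in>E. u B)"
    using 1 2 3 by linarith
  then have X: "\<bar>(1/H) * ((\<Sum>n\<in>W. f n) - H * (\<Sum>B\<in>G. s B * c B))\<bar> \<le> (1/H) * (real (card G) + real (card E) + H * (\<Sum>B\<in>E. u B))"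
    using H by (simp add: abs_mult divide_right_mono)
  have e1: "(1/H) * ((\<Sum>n\<in>W. f n) - H * (\<Sum>B\<in>G. s B * c B)) = (1/H) * (\<Sum>n\<in>W. f n) - (\<Sum>B\<in>G. s B * c B)"
    using H by (simp add: right_diff_distrib)
  have e2: "(1/H) * (real (card G) + real (card E) + H * (\<Sum>B\<in>E. u B)) = (real (card G) + real (card E)) / H + (\<Sum>B\<in>E. u B)"
    using H by (simp add: distrib_left add_divide_distrib)
  show ?thesis using X[unfolded e1 e2] .
qed

lemma poly_ineq_i:
  fixes L :: real assumes L0: "L \<ge> 0"
  shows "8 * L^2 + 27 * L + 20 \<le> L^10 / 4 + 106"
proof (cases "L \<le> 2")
  case True
  have "L^2 \<le> 2^2" using True L0 by (intro power_mono) auto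
  moreover have "L^10 \<ge> 0" using L0 by simp
  moreover have "(2::real)^2 = 4" by simp
  ultimately show ?thesis using True by linarith
next
  case False
  have "L^8 \<ge> 2^8" using False L0 by (intro power_mono) auto
  then have a: "L^8 * L^2 \<ge> 256 * L^2" by (intro mult_right_mono) auto
  have b: "L^10 = L^8 * L^2" by (simp flip: power_add)
  have c: "L^2 \<ge> 4" using power_mono[of 2 L 2] False by simp
  have d: "L \<le> L^2 / 2" using False by (simp add: power2_eq_square)
  show ?thesis using a b c d by linarith
qed

lemma ln_powr_pow10:
  fixes X :: real assumes "X > 1"
  shows "(ln X powr (1/10)) ^ 10 = ln X"
proof -
  have lp: "ln X > 0" using assms by simp
  have "(ln X powr (1/10)) ^ 10 = (ln X powr (1/10)) powr (real 10)"
    using lp by (subst powr_realpow) auto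
  also have "\<dots> = ln X powr (1/10 * 10)" by (simp add: powr_powr)
  also have "\<dots> = ln X" using lp by simp
  finally show ?thesis .
qed

lemma X_powr_quarter:
  fixes X :: real assumes "X > 1"
  shows "X powr (1/4) = exp ((ln X powr (1/10)) ^ 10 / 4)"
  by (simp only: ln_powr_pow10[OF assms]) (use assms in \<open>simp add: powr_def\<close>)

lemma asym_i:
  fixes L Y H1 :: real and M :: nat
  assumes L0: "L \<ge> 0" and M: "real M \<ge> L" "real M \<le> L + 1"
    and Y: "0 \<le> Y" "Y \<le> 3 * exp L" and H1: "H1 \<ge> exp (L ^ 10 / 4)"
  shows "4 * Y ^ (8 * M + 2) / H1 + (1/2) ^ (8 * M) * Y ^ 3 \<le> (4 * exp 106 + 27) * exp (- L)"
proof -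
  have e3: "3 \<le> exp (2::real)" using exp_ge_add_one_self[of 2] by simp
  have "3 * exp L \<le> exp 2 * exp L" by (rule mult_right_mono[OF e3]) simp
  then have "Y \<le> exp 2 * exp L" using Y by linarith
  moreover have "exp (L + 2) = exp 2 * exp L" by (simp add: exp_add mult.commute)
  ultimately have Y2: "Y \<le> exp (L + 2)" by simp
  have H1p: "H1 > 0" using H1 by (meson exp_gt_zero less_le_trans)
  have "Y ^ (8 * M + 2) \<le> exp (L + 2) ^ (8 * M + 2)" using Y Y2 by (intro power_mono) auto
  also have "\<dots> = exp ((L + 2) * real (8 * M + 2))" by (metis exp_of_nat_mult mult.commute)
  also have "\<dots> \<le> exp ((L + 2) * (8 * L + 10))"
    using M L0 by (intro exp_mono mult_left_mono) auto
  also have "\<dots> \<le> exp (L ^ 10 / 4 + 106 - L)"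
    using poly_ineq_i[OF L0] by (intro exp_mono) (simp add: algebra_simps power2_eq_square)
  finally have a: "Y ^ (8 * M + 2) \<le> exp (L ^ 10 / 4) * exp 106 * exp (- L)"
    by (simp add: exp_add[symmetric] exp_diff)
  have "4 * Y ^ (8 * M + 2) / H1 \<le> 4 * (exp (L ^ 10 / 4) * exp 106 * exp (- L)) / exp (L ^ 10 / 4)"
    using a H1 H1p Y(1) by (intro divide_mono mult_left_mono) auto
  also have "\<dots> = 4 * exp 106 * exp (- L)" by simp
  finally have A: "4 * Y ^ (8 * M + 2) / H1 \<le> 4 * exp 106 * exp (- L)" .
  have "exp (1::real) ^ 4 \<le> 3 ^ 4" using exp_le by (intro power_mono) auto
  then have "exp (4::real) \<le> 256" by (simp add: exp_of_nat_mult[symmetric])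
  then have "exp (4::real) ^ M \<le> 256 ^ M" by (intro power_mono) auto
  moreover have "(256::real) ^ M = 2 ^ (8 * M)" by (simp add: power_mult)
  moreover have "exp (4::real) ^ M = exp (4 * real M)" by (metis exp_of_nat_mult mult.commute)
  ultimately have b1: "exp (4 * real M) \<le> 2 ^ (8 * M)" by simp
  have "(1/2::real) ^ (8 * M) = 1 / 2 ^ (8 * M)" by (simp add: power_one_over)
  also have "\<dots> \<le> 1 / exp (4 * real M)" using b1 by (intro divide_left_mono) auto
  also have "\<dots> = exp (- (4 * real M))" by (simp add: exp_minus field_simps)
  also have "\<dots> \<le> exp (- 4 * L)" using M by simp
  finally have b: "(1/2::real) ^ (8 * M) \<le> exp (- 4 * L)" .
  have "Y ^ 3 \<le> (3 * exp L) ^ 3" using Y by (intro power_mono) auto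
  also have "\<dots> = 27 * exp (3 * L)" by (simp add: power_mult_distrib exp_of_nat_mult[symmetric])
  finally have c: "Y ^ 3 \<le> 27 * exp (3 * L)" .
  have "(1/2) ^ (8 * M) * Y ^ 3 \<le> exp (- 4 * L) * (27 * exp (3 * L))"
    using b c Y by (intro mult_mono) auto
  also have "\<dots> = 27 * exp (- L)" by (simp add: exp_add[symmetric])
  finally have B: "(1/2) ^ (8 * M) * Y ^ 3 \<le> 27 * exp (- L)" .
  show ?thesis using A B by (simp add: algebra_simps)
qed

lemma part_i:
  "\<exists>C::real. \<forall>X H1 H2 :: real. \<forall>a q :: nat.
            X \<ge> H2 \<and> H2 \<ge> H1 \<and> H1 \<ge> X powr (1/4) \<and> X powr (1/4) \<ge> 2 \<and> a \<ge> 1 \<and> q \<ge> 1 \<longrightarrow>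
            \<bar>win_avg (Lambda_sharp X) X H1 a q - win_avg (Lambda_sharp X) X H2 a q\<bar>
              \<le> C * exp (- (ln X powr (1/10)))"
proof (intro exI[of _ "4 * exp 106 + 27"] allI impI)
  fix X H1 H2 :: real and a q :: nat
  assume hyp: "X \<ge> H2 \<and> H2 \<ge> H1 \<and> H1 \<ge> X powr (1/4) \<and> X powr (1/4) \<ge> 2 \<and> a \<ge> 1 \<and> q \<ge> 1"
  have X1: "X > 1" and H12: "H1 \<le> H2" and H1q: "H1 \<ge> X powr (1/4)" and q1: "q \<ge> 1"
    using hyp by auto
  have H1p: "H1 > 0" using hyp by linarith
  define L where "L = ln X powr (1/10)"
  have L0: "L \<ge> 0" unfolding L_def by simp
  have H1L: "H1 \<ge> exp (L ^ 10 / 4)" using H1q X_powr_quarter[OF X1] unfolding L_def by simp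
  define R where "R = R_sharp X"
  have R: "R = exp L" unfolding R_def R_sharp_def L_def ..
  have R1: "R \<ge> 1" using R L0 by simp
  define A where "A = {p::nat. prime p \<and> real p < R}"
  define N where "N = nat \<lceil>R\<rceil>"
  have AN: "A \<subseteq> {2..N}"
  proof
    fix p assume "p \<in> A"
    then have "prime p" "real p < R" unfolding A_def by auto
    have "real p \<le> of_int \<lceil>R\<rceil>" using \<open>real p < R\<close> le_of_int_ceiling[of R] by linarith
    then have "int p \<le> \<lceil>R\<rceil>" by linarith
    then have "p \<le> N" unfolding N_def by (metis nat_int nat_mono)
    then show "p \<in> {2..N}" using prime_ge_2_nat[OF \<open>prime p\<close>] by simp
  qed
  have finA: "finite A" using AN finite_subset by blast
  have primeA: "\<And>p. p \<in> A \<Longrightarrow> prime p" unfolding A_def by auto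
  have posA: "\<And>p. p \<in> A \<Longrightarrow> p > 0" using primeA prime_gt_0_nat by blast
  have cardA: "card A \<le> N" using card_mono[OF _ AN] by simp
  have NR: "real N \<le> R + 1" unfolding N_def using R1 by linarith
  define P where "P = primorial_lt R"
  have P: "P = \<Prod>A" unfolding P_def primorial_lt_def A_def ..
  define V where "V = real P / real (totient P)"
  have V: "V = (\<Prod>p\<in>A. real p / (real p - 1))" unfolding V_def P by (rule totient_prod_primes[OF finA primeA])
  have V0: "V \<ge> 0" unfolding V by (intro prod_nonneg) (auto dest: posA)
  have VN: "V \<le> real N + 1"
  proof -
    have "V \<le> (\<Prod>n\<in>{2..N}. real n / (real n - 1))" unfolding V
      by (rule prod_sub_interval[OF AN]) auto
    also have "\<dots> = max 1 (real N)" by (rule telescope1)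
    finally show ?thesis by simp
  qed
  define M where "M = nat \<lceil>L\<rceil>"
  have M: "real M \<ge> L" "real M \<le> L + 1" unfolding M_def using L0 by linarith+
  define K where "K = 8 * M"
  define f where "f n = (if coprime n P then 1 else (0::real))" for n
  have LS: "Lambda_sharp X n = V * f n" for n
    unfolding Lambda_sharp_def f_def V_def P_def R_def by simp
  define W where "W H = {n::nat. X < real n \<and> real n \<le> X + H \<and> [n = a] (mod q)}" for H
  have finW: "finite (W H)" for H
  proof -
    have "W H \<subseteq> {t::nat. real t \<le> X + H}" unfolding W_def by auto
    then show ?thesis by (rule finite_subset) (simp add: set_nat_le_real)
  qed
  have avg: "win_avg (Lambda_sharp X) X H a q = V * ((1/H) * (\<Sum>n\<in>W H. f n))" for H
    unfolding win_avg_def W_def LS by (simp add: sum_distrib_left)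
  obtain cf where cf: "\<And>m. m \<ge> 1 \<Longrightarrow> 0 \<le> cf m \<and> cf m \<le> 1 / real m \<and> (\<forall>x H. x \<ge> 0 \<longrightarrow> H \<ge> 0 \<longrightarrow>
     \<bar>real (card {n::nat. x < real n \<and> real n \<le> x + H \<and> [n = a] (mod q) \<and> m dvd n}) - cf m * H\<bar> \<le> 1)"
  proof -
    have "\<forall>m. \<exists>c. m \<ge> 1 \<longrightarrow> 0 \<le> c \<and> c \<le> 1 / real m \<and> (\<forall>x H. x \<ge> 0 \<longrightarrow> H \<ge> 0 \<longrightarrow>
     \<bar>real (card {n::nat. x < real n \<and> real n \<le> x + H \<and> [n = a] (mod q) \<and> m dvd n}) - c * H\<bar> \<le> 1)"
      using count_AP[OF q1] by blast
    from choice[OF this] obtain g where "\<forall>m. m \<ge> 1 \<longrightarrow> 0 \<le> g m \<and> g m \<le> 1 / real m \<and> (\<forall>x H. x \<ge> 0 \<longrightarrow> H \<ge> 0 \<longrightarrow>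
     \<bar>real (card {n::nat. x < real n \<and> real n \<le> x + H \<and> [n = a] (mod q) \<and> m dvd n}) - g m * H\<bar> \<le> 1)" by blast
    then show ?thesis using that by blast
  qed
  define G where "G = {B. B \<subseteq> A \<and> card B \<le> K}"
  define E where "E = {B. B \<subseteq> A \<and> card B = Suc K}"
  have finG: "finite G" "finite E" unfolding G_def E_def using finA by auto
  define Mn where "Mn = (\<Sum>B\<in>G. (-1) ^ card B * cf (\<Prod>B))"
  have prodB: "\<Prod>B \<ge> 1" if "B \<subseteq> A" for B
  proof -
    have "\<Prod>B > 0" using that posA finite_subset[OF that finA] by (intro prod_pos) auto
    then show ?thesis by simp
  qed
  have main: "\<bar>(1/H) * (\<Sum>n\<in>W H. f n) - Mn\<bar> \<le> (real (card G) + real (card E)) / H + (\<Sum>B\<in>E. 1 / real (\<Prod>B))"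
    if H: "H > 0" for H
    unfolding Mn_def
  proof (rule window_sieve[OF finW finG, where ind = "\<lambda>B n. \<Prod>B dvd n"])
    show "\<And>B. B \<in> G \<Longrightarrow> \<bar>(-1::real) ^ card B\<bar> \<le> 1" by simp
    show "H > 0" by (rule H)
    fix n assume "n \<in> W H"
    define D where "D = {p\<in>A. p dvd n}"
    have DA: "D \<subseteq> A" unfolding D_def by auto
    have fD: "f n = (if D = {} then 1 else 0)"
      unfolding f_def D_def P using coprime_prod_primes[OF finA primeA] by simp
    have sd: "(B \<subseteq> D) \<longleftrightarrow> (\<Prod>B dvd n)" if "B \<subseteq> A" for B
    proof -
      have "finite B" using that finA finite_subset by blast
      then have "(\<Prod>B dvd n) \<longleftrightarrow> (\<forall>p\<in>B. p dvd n)" using prod_primes_dvd_iff primeA that by blast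
      then show ?thesis unfolding D_def using that by auto
    qed
    have e1: "(\<Sum>B\<in>G. if \<Prod>B dvd n then (-1::real) ^ card B else 0) = (\<Sum>B\<in>G. if B \<subseteq> D then (-1::real) ^ card B else 0)"
      by (intro sum.cong refl) (auto simp: G_def sd)
    have e2: "(\<Sum>B\<in>E. if \<Prod>B dvd n then 1 else (0::real)) = (\<Sum>B\<in>E. if B \<subseteq> D then 1 else (0::real))"
      by (intro sum.cong refl) (auto simp: E_def sd)
    show "\<bar>f n - (\<Sum>B\<in>G. if \<Prod>B dvd n then (-1::real) ^ card B else 0)\<bar> \<le> (\<Sum>B\<in>E. if \<Prod>B dvd n then 1 else 0)"
    proof -
      have "\<bar>(if D = {} then 1 else 0) - (\<Sum>B\<in>G. if B \<subseteq> D then (-1::real) ^ card B else 0)\<bar>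
         \<le> (\<Sum>B\<in>E. if B \<subseteq> D then 1 else (0::real))"
        unfolding G_def E_def by (rule sieve_pointwise_A[OF finA DA])
      then show ?thesis by (simp only: e1 e2 fD)
    qed
  next
    fix B assume B: "B \<in> G \<union> E"
    then have BA: "B \<subseteq> A" unfolding G_def E_def by auto
    have "{n \<in> W H. \<Prod>B dvd n} = {n::nat. X < real n \<and> real n \<le> X + H \<and> [n = a] (mod q) \<and> \<Prod>B dvd n}"
      unfolding W_def by auto
    then show "\<bar>real (card {n \<in> W H. \<Prod>B dvd n}) - cf (\<Prod>B) * H\<bar> \<le> 1"
      using cf[OF prodB[OF BA]] X1 H by auto
  next
    fix B assume B: "B \<in> E"
    then have BA: "B \<subseteq> A" unfolding E_def by auto
    show "cf (\<Prod>B) \<le> 1 / real (\<Prod>B)" using cf[OF prodB[OF BA]] by simp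
  qed
  define e where "e = (real (card G) + real (card E)) / H1 + (\<Sum>B\<in>E. 1 / real (\<Prod>B))"
  have m1: "\<bar>(1/H1) * (\<Sum>n\<in>W H1. f n) - Mn\<bar> \<le> e" unfolding e_def by (rule main[OF H1p])
  have "\<bar>(1/H2) * (\<Sum>n\<in>W H2. f n) - Mn\<bar> \<le> (real (card G) + real (card E)) / H2 + (\<Sum>B\<in>E. 1 / real (\<Prod>B))"
    using H1p H12 by (intro main) auto
  also have "\<dots> \<le> e" unfolding e_def using H1p H12 by (intro add_right_mono divide_left_mono) auto
  finally have m2: "\<bar>(1/H2) * (\<Sum>n\<in>W H2. f n) - Mn\<bar> \<le> e" .
  have diff: "\<bar>win_avg (Lambda_sharp X) X H1 a q - win_avg (Lambda_sharp X) X H2 a q\<bar> \<le> V * (2 * e)"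
  proof -
    have "\<bar>win_avg (Lambda_sharp X) X H1 a q - win_avg (Lambda_sharp X) X H2 a q\<bar>
        = V * \<bar>(1/H1) * (\<Sum>n\<in>W H1. f n) - (1/H2) * (\<Sum>n\<in>W H2. f n)\<bar>"
      unfolding avg right_diff_distrib[symmetric] abs_mult using V0 by simp
    also have "\<dots> \<le> V * (2 * e)" using m1 m2 V0 by (intro mult_left_mono) auto
    finally show ?thesis .
  qed
  have cGE: "real (card G) + real (card E) \<le> 2 * (real N + 1) ^ (K + 1)"
  proof -
    have fS: "finite {B. B \<subseteq> A \<and> card B \<le> Suc K}" using finA by auto
    have "card G \<le> card {B. B \<subseteq> A \<and> card B \<le> Suc K}" unfolding G_def by (rule card_mono[OF fS]) auto
    moreover have "card E \<le> card {B. B \<subseteq> A \<and> card B \<le> Suc K}" unfolding E_def by (rule card_mono[OF fS]) auto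
    moreover have "card {B. B \<subseteq> A \<and> card B \<le> Suc K} \<le> (card A + 1) ^ Suc K" by (rule card_subsets_le[OF finA])
    moreover have "(card A + 1) ^ Suc K \<le> (N + 1) ^ Suc K" using cardA by (intro power_mono) auto
    ultimately have "card G + card E \<le> 2 * (N + 1) ^ Suc K" by linarith
    then have "real (card G + card E) \<le> real (2 * (N + 1) ^ Suc K)" by (simp only: of_nat_le_iff)
    then show ?thesis by (simp add: algebra_simps)
  qed
  have sE: "(\<Sum>B\<in>E. 1 / real (\<Prod>B)) \<le> (1/2) ^ (K + 1) * (real N + 1) ^ 2"
  proof -
    have "(\<Sum>B\<in>E. 1 / real (\<Prod>B)) \<le> (1/2) ^ Suc K * (\<Prod>p\<in>A. 1 + 2 / real p)"
      unfolding E_def by (rule rankin[OF finA posA])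
    also have "\<dots> \<le> (1/2) ^ Suc K * (\<Prod>n\<in>{2..N}. 1 + 2 / real n)"
      by (intro mult_left_mono prod_sub_interval[OF AN]) auto
    also have "\<dots> \<le> (1/2) ^ Suc K * (real N + 1) ^ 2"
      by (intro mult_left_mono telescope2) auto
    finally show ?thesis by simp
  qed
  have sE0: "(\<Sum>B\<in>E. 1 / real (\<Prod>B)) \<ge> 0" by (intro sum_nonneg) (simp del: of_nat_prod)
  define Y where "Y = real N + 1"
  have Y: "0 \<le> Y" "Y \<le> 3 * exp L" unfolding Y_def using NR R1 R by linarith+
  have "V * (2 * e) \<le> Y * (2 * ((2 * Y ^ (K + 1)) / H1 + (1/2) ^ (K + 1) * Y ^ 2))"
    unfolding e_def Y_def using VN V0 cGE sE H1p sE0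
    by (intro mult_mono add_mono divide_right_mono) (auto intro!: add_nonneg_nonneg divide_nonneg_nonneg)
  also have "\<dots> = 4 * Y ^ (8 * M + 2) / H1 + (1/2) ^ (8 * M) * Y ^ 3"
    unfolding K_def by (simp add: field_simps power_add power2_eq_square power3_eq_cube)
  also have "\<dots> \<le> (4 * exp 106 + 27) * exp (- L)" by (rule asym_i[OF L0 M Y H1L])
  finally show "\<bar>win_avg (Lambda_sharp X) X H1 a q - win_avg (Lambda_sharp X) X H2 a q\<bar>
              \<le> (4 * exp 106 + 27) * exp (- (ln X powr (1/10)))" using diff unfolding L_def by simp
qed

lemma pow_diff_bound:
  fixes a b B :: real
  assumes "\<bar>a\<bar> \<le> B" "\<bar>b\<bar> \<le> B"
  shows "\<bar>a ^ Suc e - b ^ Suc e\<bar> \<le> real (Suc e) * B ^ e * \<bar>a - b\<bar>"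
proof (induction e)
  case 0 then show ?case by simp
next
  case (Suc e)
  have B0: "B \<ge> 0" using assms by linarith
  have "a ^ Suc (Suc e) - b ^ Suc (Suc e) = a * (a ^ Suc e - b ^ Suc e) + b ^ Suc e * (a - b)"
    by (simp add: algebra_simps)
  then have "\<bar>a ^ Suc (Suc e) - b ^ Suc (Suc e)\<bar> \<le> \<bar>a\<bar> * \<bar>a ^ Suc e - b ^ Suc e\<bar> + \<bar>b\<bar> ^ Suc e * \<bar>a - b\<bar>"
    by (metis abs_mult abs_triangle_ineq power_abs)
  also have "\<dots> \<le> B * (real (Suc e) * B ^ e * \<bar>a - b\<bar>) + B ^ Suc e * \<bar>a - b\<bar>"
    using Suc assms B0 by (intro add_mono mult_mono power_mono mult_right_mono) auto
  also have "\<dots> = real (Suc (Suc e)) * B ^ Suc e * \<bar>a - b\<bar>" by (simp add: algebra_simps)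
  finally show ?case .
qed

lemma g_bound:
  fixes l c t t' kk :: real and e :: nat
  assumes l: "l > 0" and kk: "kk \<ge> 1" and e: "real e \<le> kk"
    and t: "\<bar>t - c\<bar> \<le> 2 * kk * l" and t': "\<bar>t' - c\<bar> \<le> 2 * kk * l"
  shows "\<bar>(t - c) ^ e / (fact e * l ^ e)\<bar> \<le> (2 * kk) ^ e"
    and "\<bar>(t - c) ^ e / (fact e * l ^ e) - (t' - c) ^ e / (fact e * l ^ e)\<bar> \<le> (2 * kk) ^ e / l * \<bar>t - t'\<bar>"
proof -
  have f1: "(fact e :: real) \<ge> 1" by simp
  have lp: "l ^ e > 0" using l by simp
  have "\<bar>(t - c) ^ e / (fact e * l ^ e)\<bar> = \<bar>t - c\<bar> ^ e / (fact e * l ^ e)"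
    using lp l by (simp add: abs_mult power_abs)
  also have "\<dots> \<le> \<bar>t - c\<bar> ^ e / (1 * l ^ e)"
    using f1 lp by (intro divide_left_mono mult_right_mono) auto
  also have "\<dots> = \<bar>t - c\<bar> ^ e / l ^ e" by simp
  also have "\<dots> \<le> (2 * kk * l) ^ e / l ^ e" using t lp by (intro divide_right_mono power_mono) auto
  also have "\<dots> = (2 * kk) ^ e" using l by (simp add: power_mult_distrib)
  finally show "\<bar>(t - c) ^ e / (fact e * l ^ e)\<bar> \<le> (2 * kk) ^ e" .
  show "\<bar>(t - c) ^ e / (fact e * l ^ e) - (t' - c) ^ e / (fact e * l ^ e)\<bar> \<le> (2 * kk) ^ e / l * \<bar>t - t'\<bar>"
  proof (cases e)
    case 0 then show ?thesis using l by simp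
  next
    case (Suc e')
    have "\<bar>(t - c) ^ e / (fact e * l ^ e) - (t' - c) ^ e / (fact e * l ^ e)\<bar>
        = \<bar>(t - c) ^ Suc e' - (t' - c) ^ Suc e'\<bar> / (fact e * l ^ e)"
    proof -
      have "\<bar>fact e * l ^ e\<bar> = (fact e * l ^ e :: real)" using lp by simp
      then show ?thesis using Suc by (simp add: diff_divide_distrib[symmetric] abs_divide)
    qed
    also have "\<dots> \<le> (real (Suc e') * (2 * kk * l) ^ e' * \<bar>t - t'\<bar>) / (fact e * l ^ e)"
      using pow_diff_bound[OF t t', of e'] lp by (intro divide_right_mono) auto
    also have "\<dots> = (real (Suc e') / fact (Suc e')) * ((2 * kk) ^ e' / l) * \<bar>t - t'\<bar>"
    proof -
      have le: "l ^ e' > 0" using l by simp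
      have fp: "(fact e :: real) > 0" by simp
      have p1: "(2 * kk * l) ^ e' = (2 * kk) ^ e' * l ^ e'" by (simp add: power_mult_distrib)
      have p2: "l ^ e = l ^ e' * l" using Suc by simp
      have "(real (Suc e') * (2 * kk * l) ^ e' * \<bar>t - t'\<bar>) / (fact e * l ^ e)
          = ((real (Suc e') * (2 * kk) ^ e' * \<bar>t - t'\<bar>) * l ^ e') / ((fact e * l) * l ^ e')"
        unfolding p1 p2 by (simp add: ac_simps)
      also have "\<dots> = (real (Suc e') * (2 * kk) ^ e' * \<bar>t - t'\<bar>) / (fact e * l)"
        using le by (rule mult_divide_mult_cancel_right[OF less_imp_neq[OF le, symmetric]] | simp)
      also have "\<dots> = (real (Suc e') / fact (Suc e')) * ((2 * kk) ^ e' / l) * \<bar>t - t'\<bar>"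
        using Suc by simp
      finally show ?thesis .
    qed
    also have "\<dots> \<le> 1 * ((2 * kk) ^ e / l) * \<bar>t - t'\<bar>"
    proof (intro mult_right_mono mult_mono)
      have "real (Suc e') \<le> fact (Suc e')" by (metis fact_ge_self of_nat_fact of_nat_le_iff)
      then show "real (Suc e') / fact (Suc e') \<le> 1" by simp
      have "(2 * kk) ^ e' \<le> (2 * kk) ^ e" using kk Suc by (intro power_increasing) auto
      then show "(2 * kk) ^ e' / l \<le> (2 * kk) ^ e / l" using l by (simp add: divide_right_mono)
    qed (use kk l in auto)
    finally show ?thesis by simp
  qed
qed

lemma harm_bound:
  assumes "N \<ge> 1"
  shows "(\<Sum>x\<in>{1..N}. 1 / real x) \<le> 1 + ln (real N)"
  using assms
proof (induction N rule: dec_induct)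
  case base then show ?case by simp
next
  case (step N)
  have Np: "real N > 0" using step by simp
  have key: "1 / real (Suc N) \<le> ln (real (Suc N)) - ln (real N)"
  proof -
    have "ln (real N / real (Suc N)) \<le> real N / real (Suc N) - 1" using Np by (intro ln_le_minus_one) auto
    also have "\<dots> = - (1 / real (Suc N))" by (simp add: field_simps)
    finally show ?thesis using Np by (simp add: ln_div)
  qed
  have "{1..Suc N} = insert (Suc N) {1..N}" by auto
  then have "(\<Sum>x\<in>{1..Suc N}. 1 / real x) = 1 / real (Suc N) + (\<Sum>x\<in>{1..N}. 1 / real x)" by simp
  then show ?case using step key by linarith
qed

lemma sum_fibers_le:
  fixes h :: "'a \<Rightarrow> real"
  assumes "finite I" "finite U" "\<And>i. i \<in> I \<Longrightarrow> T i \<subseteq> U"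
    "\<And>i j. i \<in> I \<Longrightarrow> j \<in> I \<Longrightarrow> i \<noteq> j \<Longrightarrow> T i \<inter> T j = {}"
    "\<And>x. x \<in> U \<Longrightarrow> h x \<ge> 0"
  shows "(\<Sum>i\<in>I. \<Sum>x\<in>T i. h x) \<le> (\<Sum>x\<in>U. h x)"
proof -
  have fT: "\<forall>i\<in>I. finite (T i)" using assms finite_subset by blast
  have "(\<Sum>i\<in>I. \<Sum>x\<in>T i. h x) = (\<Sum>x\<in>(\<Union>i\<in>I. T i). h x)"
    by (rule sum.UNION_disjoint[symmetric]) (use assms fT in auto)
  also have "\<dots> \<le> (\<Sum>x\<in>U. h x)" using assms by (intro sum_mono2) auto
  finally show ?thesis .
qed

lemma window_smooth:
  fixes F :: "nat \<Rightarrow> real" and S :: "nat set"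
  assumes "finite S" "H > 0" "\<bar>real (card S) - c * H\<bar> \<le> 1" "c \<ge> 0"
    "\<And>n. n \<in> S \<Longrightarrow> \<bar>F n - F0\<bar> \<le> d" "d \<ge> 0"
  shows "\<bar>(1/H) * (\<Sum>n\<in>S. F n) - c * F0\<bar> \<le> \<bar>F0\<bar> / H + (c + 1/H) * d"
proof -
  have d0: "d \<ge> 0" using assms(6) .
  have "(\<Sum>n\<in>S. F n) = real (card S) * F0 + (\<Sum>n\<in>S. F n - F0)" by (simp add: sum_subtractf)
  moreover have "\<bar>\<Sum>n\<in>S. F n - F0\<bar> \<le> real (card S) * d"
  proof -
    have "\<bar>\<Sum>n\<in>S. F n - F0\<bar> \<le> (\<Sum>n\<in>S. \<bar>F n - F0\<bar>)" by (rule sum_abs)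
    also have "\<dots> \<le> (\<Sum>n\<in>S. d)" using assms(5) by (intro sum_mono) auto
    finally show ?thesis by simp
  qed
  moreover have "real (card S) * d \<le> (c * H + 1) * d"
  proof (cases "S = {}")
    case True then show ?thesis using assms by simp
  next
    case False then show ?thesis using d0 assms(3) by (intro mult_right_mono) auto
  qed
  moreover have "\<bar>real (card S) * F0 - c * H * F0\<bar> \<le> \<bar>F0\<bar>"
  proof -
    have "\<bar>real (card S) * F0 - c * H * F0\<bar> = \<bar>real (card S) - c * H\<bar> * \<bar>F0\<bar>" by (simp add: abs_mult left_diff_distrib[symmetric])
    also have "\<dots> \<le> 1 * \<bar>F0\<bar>" using assms(3) by (intro mult_right_mono) auto
    finally show ?thesis by simp
  qed
  ultimately have "\<bar>(\<Sum>n\<in>S. F n) - c * H * F0\<bar> \<le> \<bar>F0\<bar> + (c * H + 1) * d" by linarith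
  then have X: "\<bar>(1/H) * ((\<Sum>n\<in>S. F n) - c * H * F0)\<bar> \<le> (1/H) * (\<bar>F0\<bar> + (c * H + 1) * d)"
    using assms(2) by (simp add: abs_mult divide_right_mono)
  have e1: "(1/H) * ((\<Sum>n\<in>S. F n) - c * H * F0) = (1/H) * (\<Sum>n\<in>S. F n) - c * F0"
    using assms(2) by (simp add: right_diff_distrib)
  have e2: "(1/H) * (\<bar>F0\<bar> + (c * H + 1) * d) = \<bar>F0\<bar> / H + (c + 1/H) * d"
    using assms(2) by (simp add: field_simps)
  show ?thesis using X[unfolded e1 e2] .
qed

lemma ln_window:
  fixes X H :: real and n :: nat
  assumes "X > 0" "X < real n" "real n \<le> X + H"
  shows "0 \<le> ln (real n) - ln X" "ln (real n) - ln X \<le> H / X"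
proof -
  show "0 \<le> ln (real n) - ln X" using assms by simp
  have "ln (real n) - ln X = ln (real n / X)" using assms by (simp add: ln_div)
  also have "\<dots> \<le> real n / X - 1" using assms by (intro ln_le_minus_one) auto
  also have "\<dots> = (real n - X) / X" using assms by (simp add: field_simps)
  also have "\<dots> \<le> H / X" using assms by (intro divide_right_mono) auto
  finally show "ln (real n) - ln X \<le> H / X" .
qed

lemma part_ii_fixed:
  fixes k :: nat and X H1 H2 :: real and a q :: nat
  assumes k2: "k \<ge> 2"
    and hyp: "X \<ge> H2 \<and> H2 \<ge> H1 \<and> H1 \<ge> X powr (1/4) \<and> X powr (1/4) \<ge> 2 \<and> a \<ge> 1 \<and> q \<ge> 1"
  shows "\<bar>win_avg (dk_sharp k X) X H1 a q - win_avg (dk_sharp k X) X H2 a q\<bar>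
              \<le> (4 * (20 * real k) ^ k * 4 ^ k) * (X powr (-1/100) + H2 / X * (ln X) ^ (k - 2))"
proof -
  define B0 where "B0 = (20 * real k) ^ k"
  have B0p: "B0 \<ge> 0" unfolding B0_def by simp
  have H12: "H1 \<le> H2" and H2X: "H2 \<le> X" and H1q: "H1 \<ge> X powr (1/4)" and q1: "q \<ge> 1" and X4: "X powr (1/4) \<ge> 2"
    using hyp by auto
  have H1p: "H1 > 0" using hyp by linarith
  have X1: "X > 1" using hyp by linarith
  have X16: "X \<ge> 16"
  proof -
    have "(X powr (1/4)) ^ 4 = X powr (real 4 * (1/4))" using X1 by (subst powr_power) auto
    then have "(X powr (1/4)) ^ 4 = X" using X1 by simp
    moreover have "(2::real) ^ 4 \<le> (X powr (1/4)) ^ 4" using X4 by (intro power_mono) auto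
    ultimately show ?thesis by simp
  qed
  define lX where "lX = ln X"
  have lX1: "lX \<ge> 1"
  proof -
    have "exp 1 \<le> X" using exp_le X16 by linarith
    then have "ln (exp 1) \<le> ln X" using X1 by (subst ln_le_cancel_iff) auto
    then show ?thesis unfolding lX_def by simp
  qed
  define R where "R = R_k k X"
  have R1: "R \<ge> 1" unfolding R_def R_k_def using X1 by (intro ge_one_powr_ge_zero) auto
  have kp: "real k > 0" using k2 by simp
  define lR where "lR = ln R"
  have lR: "lR = lX / (10 * real k)" unfolding lR_def R_def R_k_def lX_def by simp
  have lRp: "lR > 0" unfolding lR using lX1 kp by simp
  define Tset where "Tset j m = {ns \<in> {0..<k-1} \<rightarrow>\<^sub>E {1..m}.
                    (\<Prod>i<k-1. ns i) = m \<and>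
                    (\<forall>i<j. real (ns i) \<le> R) \<and>
                    (\<forall>i\<in>{j..<k-1}. R < real (ns i) \<and> real (ns i) \<le> R^2)}" for j m :: nat
  define gf where "gf j ns t = (t - ln ((\<Prod>i<j. real (ns i)) * R ^ (k - j))) ^ (k - j - 1)
           / (fact (k - j - 1) * (ln R) ^ (k - j - 1))" for j :: nat and ns :: "nat \<Rightarrow> nat" and t :: real
  have Pdef: "P_poly k X m t = (\<Sum>j = 0..k-1. real (k choose j) * (\<Sum>ns\<in>Tset j m. gf j ns t))" for m t
    unfolding P_poly_def Tset_def gf_def R_def ..
  have finT: "finite (Tset j m)" for j m
  proof -
    have "Tset j m \<subseteq> {0..<k-1} \<rightarrow>\<^sub>E {1..m}" unfolding Tset_def by auto
    then show ?thesis by (rule finite_subset) (simp add: finite_PiE)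
  qed
  define Wt where "Wt m = (\<Sum>j = 0..k-1. real (k choose j) * real (card (Tset j m)))" for m
  have Wt0: "Wt m \<ge> 0" for m unfolding Wt_def by (intro sum_nonneg) auto
  have gb: "\<bar>gf j ns t\<bar> \<le> B0 \<and> \<bar>gf j ns t - gf j ns t'\<bar> \<le> B0 / lX * \<bar>t - t'\<bar>"
    if j: "j \<in> {0..k-1}" and ns: "ns \<in> Tset j m" and t: "lX \<le> t" "t \<le> lX + 1" and t': "lX \<le> t'" "t' \<le> lX + 1"
    for j m ns t t'
  proof -
    have jk: "j \<le> k - 1" using j by simp
    define pr where "pr = (\<Prod>i<j. real (ns i))"
    have nsi: "1 \<le> ns i \<and> real (ns i) \<le> R" if "i < j" for i
    proof -
      have "i \<in> {0..<k-1}" using that jk by auto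
      then have "ns i \<in> {1..m}" using ns unfolding Tset_def by (auto simp: PiE_iff)
      moreover have "real (ns i) \<le> R" using ns that unfolding Tset_def by auto
      ultimately show ?thesis by auto
    qed
    have pr1: "pr \<ge> 1" unfolding pr_def using nsi by (intro prod_ge_1) auto
    have prR: "pr \<le> R ^ j" unfolding pr_def using nsi R1 by (intro prod_le_power) auto
    define c where "c = ln (pr * R ^ (k - j))"
    have Rkj: "R ^ (k - j) \<ge> 1" using R1 by simp
    have "1 * 1 \<le> pr * R ^ (k - j)" using pr1 Rkj by (intro mult_mono) auto
    then have c0: "c \<ge> 0" unfolding c_def by simp
    have "c \<le> ln (R ^ j * R ^ (k - j))" unfolding c_def using pr1 Rkj prR
      by (subst ln_le_cancel_iff) (auto intro: mult_right_mono)
    also have "R ^ j * R ^ (k - j) = R ^ k" using jk k2 by (simp flip: power_add)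
    also have "ln (R ^ k) = real k * lR" unfolding lR_def using R1 by (simp add: ln_realpow)
    also have "\<dots> = lX / 10" unfolding lR using kp by simp
    finally have cX: "c \<le> lX / 10" .
    have tc: "\<bar>t - c\<bar> \<le> 2 * (10 * real k) * lR" using t c0 cX lX1 unfolding lR using kp by (simp add: abs_le_iff) 
    have tc': "\<bar>t' - c\<bar> \<le> 2 * (10 * real k) * lR" using t' c0 cX lX1 unfolding lR using kp by (simp add: abs_le_iff)
    have ek: "real (k - j - 1) \<le> 10 * real k" by simp
    have gfe: "gf j ns s = (s - c) ^ (k - j - 1) / (fact (k - j - 1) * lR ^ (k - j - 1))" for s
      unfolding gf_def c_def pr_def lR_def ..
    have kk1: "10 * real k \<ge> 1" using kp by simp
    note G = g_bound[OF lRp kk1 ek tc tc']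
    have e20: "2 * (10 * real k) = 20 * real k" by simp
    have pw: "(2 * (10 * real k)) ^ (k - j - 1) \<le> B0" unfolding B0_def e20 using kp by (intro power_increasing) auto
    have pw2: "(2 * (10 * real k)) ^ (k - j - 1) / lR \<le> B0 / lX"
    proof -
      have "(2 * (10 * real k)) ^ (k - j - 1) / lR = (20 * real k) ^ (k - j - 1) * (10 * real k) / lX"
        unfolding lR using kp lX1 by (simp add: field_simps)
      also have "\<dots> \<le> (20 * real k) ^ (k - j - 1) * (20 * real k) / lX"
        using kp lX1 by (intro divide_right_mono mult_left_mono) auto
      also have "\<dots> = (20 * real k) ^ Suc (k - j - 1) / lX" by simp
      also have "\<dots> \<le> B0 / lX" unfolding B0_def using kp lX1 jk k2
        by (intro divide_right_mono power_increasing) auto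
      finally show ?thesis .
    qed
    have "\<bar>gf j ns t\<bar> \<le> B0" unfolding gfe using G(1) pw by linarith
    moreover have "\<bar>gf j ns t - gf j ns t'\<bar> \<le> B0 / lX * \<bar>t - t'\<bar>"
      unfolding gfe using G(2) pw2 by (meson abs_ge_zero mult_right_mono order_trans)
    ultimately show ?thesis by simp
  qed
  have Pb: "\<bar>P_poly k X m t\<bar> \<le> B0 * Wt m \<and> \<bar>P_poly k X m t - P_poly k X m t'\<bar> \<le> B0 / lX * Wt m * \<bar>t - t'\<bar>"
    if t: "lX \<le> t" "t \<le> lX + 1" and t': "lX \<le> t'" "t' \<le> lX + 1" for m t t'
  proof
    have "\<bar>P_poly k X m t\<bar> \<le> (\<Sum>j = 0..k-1. \<bar>real (k choose j) * (\<Sum>ns\<in>Tset j m. gf j ns t)\<bar>)"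
      unfolding Pdef by (rule sum_abs)
    also have "\<dots> \<le> (\<Sum>j = 0..k-1. real (k choose j) * (B0 * real (card (Tset j m))))"
    proof (intro sum_mono)
      fix j assume j: "j \<in> {0..k-1}"
      have "\<bar>\<Sum>ns\<in>Tset j m. gf j ns t\<bar> \<le> (\<Sum>ns\<in>Tset j m. \<bar>gf j ns t\<bar>)" by (rule sum_abs)
      also have "\<dots> \<le> (\<Sum>ns\<in>Tset j m. B0)" using gb[OF j _ t t] by (intro sum_mono) blast
      finally have "\<bar>\<Sum>ns\<in>Tset j m. gf j ns t\<bar> \<le> B0 * real (card (Tset j m))" by (simp add: mult.commute)
      then have "real (k choose j) * \<bar>\<Sum>ns\<in>Tset j m. gf j ns t\<bar> \<le> real (k choose j) * (B0 * real (card (Tset j m)))"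
        by (rule mult_left_mono) simp
      then show "\<bar>real (k choose j) * (\<Sum>ns\<in>Tset j m. gf j ns t)\<bar> \<le> real (k choose j) * (B0 * real (card (Tset j m)))"
        by (simp only: abs_mult abs_of_nat)
    qed
    also have "\<dots> = B0 * Wt m" unfolding Wt_def by (simp add: sum_distrib_left ac_simps)
    finally show "\<bar>P_poly k X m t\<bar> \<le> B0 * Wt m" .
  next
    have "P_poly k X m t - P_poly k X m t' = (\<Sum>j = 0..k-1. real (k choose j) * (\<Sum>ns\<in>Tset j m. gf j ns t - gf j ns t'))"
      unfolding Pdef sum_subtractf[symmetric] right_diff_distrib[symmetric] ..
    then have "\<bar>P_poly k X m t - P_poly k X m t'\<bar> \<le> (\<Sum>j = 0..k-1. \<bar>real (k choose j) * (\<Sum>ns\<in>Tset j m. gf j ns t - gf j ns t')\<bar>)"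
      by (simp only: sum_abs)
    also have "\<dots> \<le> (\<Sum>j = 0..k-1. real (k choose j) * (B0 / lX * \<bar>t - t'\<bar> * real (card (Tset j m))))"
    proof (intro sum_mono)
      fix j assume j: "j \<in> {0..k-1}"
      have "\<bar>\<Sum>ns\<in>Tset j m. gf j ns t - gf j ns t'\<bar> \<le> (\<Sum>ns\<in>Tset j m. \<bar>gf j ns t - gf j ns t'\<bar>)" by (rule sum_abs)
      also have "\<dots> \<le> (\<Sum>ns\<in>Tset j m. B0 / lX * \<bar>t - t'\<bar>)" using gb[OF j _ t t'] by (intro sum_mono) blast
      finally have "\<bar>\<Sum>ns\<in>Tset j m. gf j ns t - gf j ns t'\<bar> \<le> B0 / lX * \<bar>t - t'\<bar> * real (card (Tset j m))" by (simp add: mult.commute)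
      then have "real (k choose j) * \<bar>\<Sum>ns\<in>Tset j m. gf j ns t - gf j ns t'\<bar> \<le> real (k choose j) * (B0 / lX * \<bar>t - t'\<bar> * real (card (Tset j m)))"
        by (rule mult_left_mono) simp
      then show "\<bar>real (k choose j) * (\<Sum>ns\<in>Tset j m. gf j ns t - gf j ns t')\<bar> \<le> real (k choose j) * (B0 / lX * \<bar>t - t'\<bar> * real (card (Tset j m)))"
        by (simp only: abs_mult abs_of_nat)
    qed
    also have "\<dots> = B0 / lX * Wt m * \<bar>t - t'\<bar>" unfolding Wt_def by (simp add: sum_distrib_left ac_simps)
    finally show "\<bar>P_poly k X m t - P_poly k X m t'\<bar> \<le> B0 / lX * Wt m * \<bar>t - t'\<bar>" .
  qed
  define Mb where "Mb = R ^ (2*k - 2)"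
  define Ms where "Ms = {m::nat. 1 \<le> m \<and> real m \<le> Mb}"
  have finMs: "finite Ms"
  proof -
    have "Ms \<subseteq> {t::nat. real t \<le> Mb}" unfolding Ms_def by auto
    then show ?thesis by (rule finite_subset) (simp add: set_nat_le_real)
  qed
  obtain cf where cf: "\<And>m. m \<ge> 1 \<Longrightarrow> 0 \<le> cf m \<and> cf m \<le> 1 / real m \<and> (\<forall>x H. x \<ge> 0 \<longrightarrow> H \<ge> 0 \<longrightarrow>
     \<bar>real (card {n::nat. x < real n \<and> real n \<le> x + H \<and> [n = a] (mod q) \<and> m dvd n}) - cf m * H\<bar> \<le> 1)"
  proof -
    have "\<forall>m. \<exists>c. m \<ge> 1 \<longrightarrow> 0 \<le> c \<and> c \<le> 1 / real m \<and> (\<forall>x H. x \<ge> 0 \<longrightarrow> H \<ge> 0 \<longrightarrow>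
     \<bar>real (card {n::nat. x < real n \<and> real n \<le> x + H \<and> [n = a] (mod q) \<and> m dvd n}) - c * H\<bar> \<le> 1)"
      using count_AP[OF q1] by blast
    from choice[OF this] obtain g where "\<forall>m. m \<ge> 1 \<longrightarrow> 0 \<le> g m \<and> g m \<le> 1 / real m \<and> (\<forall>x H. x \<ge> 0 \<longrightarrow> H \<ge> 0 \<longrightarrow>
     \<bar>real (card {n::nat. x < real n \<and> real n \<le> x + H \<and> [n = a] (mod q) \<and> m dvd n}) - g m * H\<bar> \<le> 1)" by blast
    then show ?thesis using that by blast
  qed
  define Sm where "Sm H m = {n::nat. X < real n \<and> real n \<le> X + H \<and> [n = a] (mod q) \<and> m dvd n}" for H m
  have finSm: "finite (Sm H m)" for H m
  proof -
    have "Sm H m \<subseteq> {t::nat. real t \<le> X + H}" unfolding Sm_def by auto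
    then show ?thesis by (rule finite_subset) (simp add: set_nat_le_real)
  qed
  define SS where "SS H m = (1/H) * (\<Sum>n\<in>Sm H m. P_poly k X m (ln (real n)))" for H m
  have avg: "win_avg (dk_sharp k X) X H a q = (\<Sum>m\<in>Ms. SS H m)" for H
  proof -
    define W where "W = {n::nat. X < real n \<and> real n \<le> X + H \<and> [n = a] (mod q)}"
    have finW: "finite W"
    proof -
      have "W \<subseteq> {t::nat. real t \<le> X + H}" unfolding W_def by auto
      then show ?thesis by (rule finite_subset) (simp add: set_nat_le_real)
    qed
    have dk: "dk_sharp k X n = (\<Sum>m\<in>Ms. if m dvd n then P_poly k X m (ln (real n)) else 0)" for n
    proof -
      have "{m::nat. 1 \<le> m \<and> real m \<le> (R_k k X) ^ (2*k - 2) \<and> m dvd n} = {m \<in> Ms. m dvd n}"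
        unfolding Ms_def Mb_def R_def by auto
      then show ?thesis unfolding dk_sharp_def
        using sum.inter_filter[OF finMs, of "\<lambda>m. P_poly k X m (ln (real n))" "\<lambda>m. m dvd n"] by simp
    qed
    have inner: "(\<Sum>n\<in>W. if m dvd n then P_poly k X m (ln (real n)) else 0) = (\<Sum>n\<in>Sm H m. P_poly k X m (ln (real n)))" for m
    proof -
      have "{n\<in>W. m dvd n} = Sm H m" unfolding W_def Sm_def by auto
      then show ?thesis using sum.inter_filter[OF finW, of "\<lambda>n. P_poly k X m (ln (real n))" "\<lambda>n. m dvd n"] by simp
    qed
    have "win_avg (dk_sharp k X) X H a q = (1/H) * (\<Sum>n\<in>W. \<Sum>m\<in>Ms. if m dvd n then P_poly k X m (ln (real n)) else 0)"
      unfolding win_avg_def W_def dk ..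
    also have "\<dots> = (1/H) * (\<Sum>m\<in>Ms. \<Sum>n\<in>W. if m dvd n then P_poly k X m (ln (real n)) else 0)"
      by (subst sum.swap) (rule refl)
    also have "\<dots> = (1/H) * (\<Sum>m\<in>Ms. \<Sum>n\<in>Sm H m. P_poly k X m (ln (real n)))" by (simp only: inner)
    also have "\<dots> = (\<Sum>m\<in>Ms. SS H m)" unfolding SS_def by (simp add: sum_distrib_left)
    finally show ?thesis .
  qed
  define dm where "dm m = B0 / lX * Wt m * (H2 / X)" for m
  have dm0: "dm m \<ge> 0" for m unfolding dm_def using B0p lX1 Wt0[of m] X1 H1p H12
    by (intro mult_nonneg_nonneg divide_nonneg_nonneg) auto
  have lXle: "lX \<le> lX" "lX \<le> lX + 1" by auto
  have per: "\<bar>SS H m - cf m * P_poly k X m lX\<bar> \<le> \<bar>P_poly k X m lX\<bar> / H + (cf m + 1/H) * dm m"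
    if m: "m \<in> Ms" and H: "0 < H" "H \<le> H2" for m H
    unfolding SS_def
  proof (rule window_smooth[OF finSm H(1)])
    have m1: "m \<ge> 1" using m unfolding Ms_def by simp
    show "\<bar>real (card (Sm H m)) - cf m * H\<bar> \<le> 1" using cf[OF m1] X1 H unfolding Sm_def by auto
    show "cf m \<ge> 0" using cf[OF m1] by simp
    show "dm m \<ge> 0" by (rule dm0)
    fix n assume n: "n \<in> Sm H m"
    then have nX: "X < real n" "real n \<le> X + H" unfolding Sm_def by auto
    have l1: "0 \<le> ln (real n) - ln X" "ln (real n) - ln X \<le> H / X" using ln_window[of X n H] nX X1 by auto
    have "H / X \<le> H2 / X" using H X1 by (intro divide_right_mono) auto
    moreover have "H2 / X \<le> 1" using H2X X1 by simp
    ultimately have t: "lX \<le> ln (real n)" "ln (real n) \<le> lX + 1" "\<bar>ln (real n) - lX\<bar> \<le> H2 / X"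
      unfolding lX_def using l1 by auto
    have "\<bar>P_poly k X m (ln (real n)) - P_poly k X m lX\<bar> \<le> B0 / lX * Wt m * \<bar>ln (real n) - lX\<bar>"
      using Pb[OF t(1) t(2) lXle, of m] by blast
    also have "\<dots> \<le> B0 / lX * Wt m * (H2 / X)"
      using t(3) B0p lX1 Wt0[of m] by (intro mult_left_mono mult_nonneg_nonneg divide_nonneg_nonneg) auto
    finally show "\<bar>P_poly k X m (ln (real n)) - P_poly k X m lX\<bar> \<le> dm m" unfolding dm_def .
  qed
  have perm: "\<bar>SS H1 m - SS H2 m\<bar> \<le> 4 * B0 * Wt m / H1 + 2 * (B0 / lX) * (H2 / X) * (Wt m / real m)"
    if m: "m \<in> Ms" for m
  proof -
    have m1: "m \<ge> 1" using m unfolding Ms_def by simp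
    define P0 where "P0 = P_poly k X m lX"
    define c where "c = cf m"
    define w where "w = Wt m"
    define d where "d = dm m"
    have c0: "c \<ge> 0" and cm: "c \<le> 1 / real m" using cf[OF m1] unfolding c_def by auto
    have d0: "d \<ge> 0" unfolding d_def by (rule dm0)
    have A1: "\<bar>SS H1 m - c * P0\<bar> \<le> \<bar>P0\<bar> / H1 + (c + 1/H1) * d"
      unfolding c_def P0_def d_def using per[OF m H1p H12] .
    have A2': "\<bar>SS H2 m - c * P0\<bar> \<le> \<bar>P0\<bar> / H2 + (c + 1/H2) * d"
      unfolding c_def P0_def d_def using per[OF m _ order_refl] H1p H12 by auto
    have "\<bar>P0\<bar> / H2 \<le> \<bar>P0\<bar> / H1" using H1p H12 by (intro divide_left_mono) auto
    moreover have "(c + 1/H2) * d \<le> (c + 1/H1) * d" using H1p H12 d0 by (intro mult_right_mono add_left_mono divide_left_mono) auto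
    ultimately have A2: "\<bar>SS H2 m - c * P0\<bar> \<le> \<bar>P0\<bar> / H1 + (c + 1/H1) * d" using A2' by linarith
    have "\<bar>P0\<bar> \<le> B0 * w" unfolding P0_def w_def using Pb[OF lXle lXle, of m] by blast
    then have B: "\<bar>P0\<bar> / H1 \<le> B0 * w / H1" using H1p by (intro divide_right_mono) auto
    have E: "(c + 1/H1) * d = c * d + d / H1" by (simp add: field_simps)
    have "c * d \<le> (1 / real m) * d" using cm d0 by (intro mult_right_mono) auto
    also have "\<dots> = (B0 / lX) * (H2 / X) * (w / real m)" unfolding d_def dm_def w_def by (simp add: field_simps)
    finally have C: "c * d \<le> (B0 / lX) * (H2 / X) * (w / real m)" .
    have r: "(H2 / X) / lX \<le> 1"
    proof -
      have "(H2 / X) / lX \<le> (H2 / X) / 1" using lX1 H1p H12 X1 by (intro divide_left_mono) auto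
      also have "\<dots> \<le> 1" using H2X X1 by simp
      finally show ?thesis .
    qed
    have "d = B0 * w * ((H2 / X) / lX)" unfolding d_def dm_def w_def by (simp add: field_simps)
    also have "\<dots> \<le> B0 * w * 1" using r B0p Wt0[of m] unfolding w_def by (intro mult_left_mono) auto
    finally have "d \<le> B0 * w" by simp
    then have D: "d / H1 \<le> B0 * w / H1" using H1p by (intro divide_right_mono) auto
    have "\<bar>SS H1 m - SS H2 m\<bar> \<le> \<bar>SS H1 m - c * P0\<bar> + \<bar>SS H2 m - c * P0\<bar>" by linarith
    also have "\<dots> \<le> 4 * B0 * w / H1 + 2 * (B0 / lX) * (H2 / X) * (w / real m)"
      using A1 A2 B C D E by linarith
    finally show ?thesis unfolding w_def .
  qed
  have sumdiff: "\<bar>win_avg (dk_sharp k X) X H1 a q - win_avg (dk_sharp k X) X H2 a q\<bar>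
      \<le> 4 * B0 / H1 * (\<Sum>m\<in>Ms. Wt m) + 2 * (B0 / lX) * (H2 / X) * (\<Sum>m\<in>Ms. Wt m / real m)"
  proof -
    have "\<bar>win_avg (dk_sharp k X) X H1 a q - win_avg (dk_sharp k X) X H2 a q\<bar> = \<bar>\<Sum>m\<in>Ms. SS H1 m - SS H2 m\<bar>"
      unfolding avg by (simp add: sum_subtractf)
    also have "\<dots> \<le> (\<Sum>m\<in>Ms. \<bar>SS H1 m - SS H2 m\<bar>)" by (rule sum_abs)
    also have "\<dots> \<le> (\<Sum>m\<in>Ms. 4 * B0 * Wt m / H1 + 2 * (B0 / lX) * (H2 / X) * (Wt m / real m))"
      by (intro sum_mono perm)
    also have "\<dots> = 4 * B0 / H1 * (\<Sum>m\<in>Ms. Wt m) + 2 * (B0 / lX) * (H2 / X) * (\<Sum>m\<in>Ms. Wt m / real m)"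
      by (simp add: sum.distrib sum_distrib_left)
    finally show ?thesis .
  qed
  define Nn where "Nn = nat \<lfloor>R^2\<rfloor>"
  have R2: "R^2 \<ge> 1" using R1 by simp
  have Nn1: "Nn \<ge> 1" unfolding Nn_def using R2 by linarith
  have NnR: "real Nn \<le> R^2" unfolding Nn_def using R2 by linarith
  define U where "U = {0..<k-1} \<rightarrow>\<^sub>E {1..Nn}"
  have finU: "finite U" unfolding U_def by (simp add: finite_PiE)
  have cardU: "card U = Nn ^ (k - 1)" unfolding U_def by (simp add: card_PiE)
  have TU: "Tset j m \<subseteq> U" for j m
  proof
    fix ns assume ns: "ns \<in> Tset j m"
    then have pi: "ns \<in> {0..<k-1} \<rightarrow>\<^sub>E {1..m}" unfolding Tset_def by auto
    have "ns i \<in> {1..Nn}" if i: "i \<in> {0..<k-1}" for i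
    proof -
      have "ns i \<ge> 1" using pi i by (auto simp: PiE_iff)
      moreover have "real (ns i) \<le> R^2"
      proof (cases "i < j")
        case True
        then have "real (ns i) \<le> R" using ns unfolding Tset_def by auto
        also have "R \<le> R^2" using R1 by (simp add: power2_eq_square)
        finally show ?thesis .
      next
        case False
        then have "i \<in> {j..<k-1}" using i by auto
        then show ?thesis using ns unfolding Tset_def by auto
      qed
      then have "ns i \<le> Nn" unfolding Nn_def by (simp add: le_nat_floor)
      ultimately show ?thesis by simp
    qed
    then show "ns \<in> U" unfolding U_def using pi by (auto simp: PiE_iff)
  qed
  have prodT: "(\<Prod>i<k-1. ns i) = m" if "ns \<in> Tset j m" for ns j m
    using that unfolding Tset_def by auto
  have disj: "Tset j m \<inter> Tset j m' = {}" if "m \<noteq> m'" for j m m'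
    using prodT that by blast
  have sumT: "(\<Sum>m\<in>Ms. real (card (Tset j m))) \<le> real (Nn ^ (k - 1))" for j
  proof -
    have "(\<Sum>m\<in>Ms. real (card (Tset j m))) = (\<Sum>m\<in>Ms. \<Sum>ns\<in>Tset j m. 1)" by simp
    also have "\<dots> \<le> (\<Sum>ns\<in>U. 1)" by (rule sum_fibers_le[OF finMs finU TU disj]) auto
    finally show ?thesis using cardU by simp
  qed
  define HN where "HN = (\<Sum>x\<in>{1..Nn}. 1 / real x)"
  have HN0: "HN \<ge> 0" unfolding HN_def by (intro sum_nonneg) auto
  have sumT2: "(\<Sum>m\<in>Ms. real (card (Tset j m)) / real m) \<le> HN ^ (k - 1)" for j
  proof -
    define hh where "hh ns = (\<Prod>i\<in>{0..<k-1}. 1 / real (ns i))" for ns :: "nat \<Rightarrow> nat"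
    have "real (card (Tset j m)) / real m = (\<Sum>ns\<in>Tset j m. hh ns)" if "m \<in> Ms" for m
    proof -
      have "hh ns = 1 / real m" if "ns \<in> Tset j m" for ns
      proof -
        have "hh ns = 1 / (\<Prod>i\<in>{0..<k-1}. real (ns i))" unfolding hh_def by (simp add: prod_dividef)
        also have "(\<Prod>i\<in>{0..<k-1}. real (ns i)) = real (\<Prod>i<k-1. ns i)" by (simp add: of_nat_prod atLeast0LessThan)
        also have "\<dots> = real m" using prodT[OF that] by simp
        finally show ?thesis .
      qed
      then have "(\<Sum>ns\<in>Tset j m. hh ns) = (\<Sum>ns\<in>Tset j m. 1 / real m)" by (intro sum.cong) auto
      then show ?thesis by simp
    qed
    then have "(\<Sum>m\<in>Ms. real (card (Tset j m)) / real m) = (\<Sum>m\<in>Ms. \<Sum>ns\<in>Tset j m. hh ns)" by (intro sum.cong) auto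
    also have "\<dots> \<le> (\<Sum>ns\<in>U. hh ns)"
      by (rule sum_fibers_le[OF finMs finU TU disj]) (auto simp: hh_def intro!: prod_nonneg)
    also have "\<dots> = (\<Prod>i\<in>{0..<k-1}. \<Sum>x\<in>{1..Nn}. 1 / real x)"
      unfolding U_def hh_def by (rule prod_sum_PiE[symmetric]) auto
    also have "\<dots> = HN ^ (k - 1)" unfolding HN_def by simp
    finally show ?thesis .
  qed
  have csum: "(\<Sum>j = 0..k-1. real (k choose j)) \<le> 2 ^ k"
  proof -
    have "(\<Sum>j = 0..k-1. real (k choose j)) \<le> (\<Sum>j\<le>k. real (k choose j))" by (intro sum_mono2) auto
    also have "\<dots> = real (\<Sum>j\<le>k. k choose j)" by simp
    also have "\<dots> = 2 ^ k" by (simp add: choose_row_sum)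
    finally show ?thesis .
  qed
  have SW: "(\<Sum>m\<in>Ms. Wt m) \<le> 2 ^ k * real Nn ^ (k - 1)"
  proof -
    have "(\<Sum>m\<in>Ms. Wt m) = (\<Sum>j = 0..k-1. real (k choose j) * (\<Sum>m\<in>Ms. real (card (Tset j m))))"
      unfolding Wt_def by (subst sum.swap) (simp add: sum_distrib_left)
    also have "\<dots> \<le> (\<Sum>j = 0..k-1. real (k choose j) * real (Nn ^ (k - 1)))"
      by (intro sum_mono mult_left_mono sumT) auto
    also have "\<dots> = (\<Sum>j = 0..k-1. real (k choose j)) * real Nn ^ (k - 1)" by (simp add: sum_distrib_right)
    also have "\<dots> \<le> 2 ^ k * real Nn ^ (k - 1)" using csum by (intro mult_right_mono) auto
    finally show ?thesis .
  qed
  have SW2: "(\<Sum>m\<in>Ms. Wt m / real m) \<le> 2 ^ k * HN ^ (k - 1)"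
  proof -
    have "(\<Sum>m\<in>Ms. Wt m / real m) = (\<Sum>m\<in>Ms. \<Sum>j = 0..k-1. real (k choose j) * (real (card (Tset j m)) / real m))"
      unfolding Wt_def by (simp add: sum_divide_distrib)
    also have "\<dots> = (\<Sum>j = 0..k-1. \<Sum>m\<in>Ms. real (k choose j) * (real (card (Tset j m)) / real m))"
      by (rule sum.swap)
    also have "\<dots> = (\<Sum>j = 0..k-1. real (k choose j) * (\<Sum>m\<in>Ms. real (card (Tset j m)) / real m))"
      by (simp add: sum_distrib_left)
    also have "\<dots> \<le> (\<Sum>j = 0..k-1. real (k choose j) * HN ^ (k - 1))"
      by (intro sum_mono mult_left_mono sumT2) auto
    also have "\<dots> = (\<Sum>j = 0..k-1. real (k choose j)) * HN ^ (k - 1)" by (simp add: sum_distrib_right)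
    also have "\<dots> \<le> 2 ^ k * HN ^ (k - 1)" using csum HN0 by (intro mult_right_mono) auto
    finally show ?thesis .
  qed
  have NA: "real Nn ^ (k - 1) / H1 \<le> X powr (-1/100)"
  proof -
    have "real Nn ^ (k - 1) \<le> (R^2) ^ (k - 1)" using NnR by (intro power_mono) auto
    also have "\<dots> = (X powr (1 / (10 * real k))) ^ (2 * (k - 1))" unfolding R_def R_k_def by (simp add: power_mult)
    also have "\<dots> = X powr (real (2 * (k - 1)) * (1 / (10 * real k)))" using X1 by (subst powr_power) auto
    also have "\<dots> \<le> X powr (1/5)"
    proof (rule powr_mono)
      have "real (2 * (k - 1)) \<le> 2 * real k" by simp
      then have "real (2 * (k - 1)) * (1 / (10 * real k)) \<le> 2 * real k * (1 / (10 * real k))"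
        using kp by (intro mult_right_mono) auto
      also have "\<dots> = 1/5" using kp by simp
      finally show "real (2 * (k - 1)) * (1 / (10 * real k)) \<le> 1/5" .
    qed (use X1 in auto)
    finally have n1: "real Nn ^ (k - 1) \<le> X powr (1/5)" .
    have xp: "X powr (1/4) > 0" using X1 by simp
    have "real Nn ^ (k - 1) / H1 \<le> X powr (1/5) / X powr (1/4)"
      using n1 H1q xp by (intro frac_le) auto
    also have "\<dots> = X powr (1/5 - 1/4)" by (rule powr_diff[symmetric])
    also have "\<dots> \<le> X powr (-1/100)" using X1 by (intro powr_mono) auto
    finally show ?thesis .
  qed
  have HB: "HN ^ (k - 1) / lX \<le> 2 ^ (k - 1) * lX ^ (k - 2)"
  proof -
    have "HN \<le> 1 + ln (real Nn)" unfolding HN_def by (rule harm_bound[OF Nn1])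
    also have "ln (real Nn) \<le> ln (R^2)" using Nn1 NnR by (subst ln_le_cancel_iff) auto
    also have "ln (R^2) = 2 * lR" unfolding lR_def using R1 by (simp add: ln_realpow)
    also have "2 * lR \<le> lX" unfolding lR using kp lX1 k2 by (simp add: field_simps)
    finally have "HN \<le> 2 * lX" using lX1 by linarith
    then have "HN ^ (k - 1) \<le> (2 * lX) ^ (k - 1)" using HN0 by (intro power_mono) auto
    also have "\<dots> = 2 ^ (k - 1) * (lX ^ (k - 2) * lX)"
    proof -
      have "k - 1 = Suc (k - 2)" using k2 by simp
      then show ?thesis by (simp add: power_mult_distrib)
    qed
    finally have "HN ^ (k - 1) \<le> 2 ^ (k - 1) * lX ^ (k - 2) * lX" by simp
    then show ?thesis using lX1 by (simp add: divide_le_eq)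
  qed
  have "\<bar>win_avg (dk_sharp k X) X H1 a q - win_avg (dk_sharp k X) X H2 a q\<bar>
      \<le> 4 * B0 / H1 * (2 ^ k * real Nn ^ (k - 1)) + 2 * (B0 / lX) * (H2 / X) * (2 ^ k * HN ^ (k - 1))"
    using sumdiff SW SW2 B0p H1p lX1 H12 X1
    by (smt (verit, best) divide_nonneg_nonneg mult_left_mono mult_nonneg_nonneg)
  also have "\<dots> = 4 * B0 * 2 ^ k * (real Nn ^ (k - 1) / H1) + 2 * B0 * 2 ^ k * (H2 / X) * (HN ^ (k - 1) / lX)"
    by (simp add: field_simps)
  also have "\<dots> \<le> 4 * B0 * 2 ^ k * X powr (-1/100) + 2 * B0 * 2 ^ k * (H2 / X) * (2 ^ (k - 1) * lX ^ (k - 2))"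
    using NA HB B0p H1p H12 X1 by (intro add_mono mult_left_mono) auto
  also have "\<dots> \<le> 4 * B0 * 4 ^ k * X powr (-1/100) + 4 * B0 * 4 ^ k * (H2 / X * lX ^ (k - 2))"
  proof (intro add_mono)
    have "(2::real) ^ k \<le> 4 ^ k" by (intro power_mono) auto
    then show "4 * B0 * 2 ^ k * X powr (-1/100) \<le> 4 * B0 * 4 ^ k * X powr (-1/100)"
      using B0p by (intro mult_right_mono mult_left_mono) auto
    have "2 * (2::real) ^ k * 2 ^ (k - 1) = 4 ^ k"
    proof -
      have "2 * (2::real) ^ (k - 1) = 2 ^ k" using k2 by (metis power_Suc Suc_diff_1 less_le_trans zero_less_two pos2 le_less_trans order_refl Suc_1 Suc_le_lessD)
      then have "2 * (2::real) ^ k * 2 ^ (k - 1) = 2 ^ k * 2 ^ k" by (simp add: ac_simps)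
      also have "\<dots> = 4 ^ k" by (simp flip: power_mult_distrib)
      finally show ?thesis .
    qed
    then have "2 * B0 * 2 ^ k * (H2 / X) * (2 ^ (k - 1) * lX ^ (k - 2)) = B0 * 4 ^ k * (H2 / X * lX ^ (k - 2))"
      by (simp add: ac_simps)
    also have "\<dots> \<le> 4 * B0 * 4 ^ k * (H2 / X * lX ^ (k - 2))"
      using B0p H1p H12 X1 lX1 by (intro mult_right_mono) auto
    finally show "2 * B0 * 2 ^ k * (H2 / X) * (2 ^ (k - 1) * lX ^ (k - 2)) \<le> 4 * B0 * 4 ^ k * (H2 / X * lX ^ (k - 2))" .
  qed
  also have "\<dots> = (4 * (20 * real k) ^ k * 4 ^ k) * (X powr (-1/100) + H2 / X * (ln X) ^ (k - 2))"
    unfolding B0_def lX_def by (simp add: algebra_simps)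
  finally show ?thesis .
qed

theorem lemma3p3:
  shows "(\<exists>C::real. \<forall>X H1 H2 :: real. \<forall>a q :: nat.
            X \<ge> H2 \<and> H2 \<ge> H1 \<and> H1 \<ge> X powr (1/4) \<and> X powr (1/4) \<ge> 2 \<and> a \<ge> 1 \<and> q \<ge> 1 \<longrightarrow>
            \<bar>win_avg (Lambda_sharp X) X H1 a q - win_avg (Lambda_sharp X) X H2 a q\<bar>
              \<le> C * exp (- (ln X powr (1/10))))
       \<and> (\<forall>k::nat. k \<ge> 2 \<longrightarrow>
          (\<exists>C::real. \<forall>X H1 H2 :: real. \<forall>a q :: nat.
            X \<ge> H2 \<and> H2 \<ge> H1 \<and> H1 \<ge> X powr (1/4) \<and> X powr (1/4) \<ge> 2 \<and> a \<ge> 1 \<and> q \<ge> 1 \<longrightarrow>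
            \<bar>win_avg (dk_sharp k X) X H1 a q - win_avg (dk_sharp k X) X H2 a q\<bar>
              \<le> C * (X powr (-1/100) + H2 / X * (ln X) ^ (k - 2))))"
proof (rule conjI)
  show "\<exists>C::real. \<forall>X H1 H2 :: real. \<forall>a q :: nat.
            X \<ge> H2 \<and> H2 \<ge> H1 \<and> H1 \<ge> X powr (1/4) \<and> X powr (1/4) \<ge> 2 \<and> a \<ge> 1 \<and> q \<ge> 1 \<longrightarrow>
            \<bar>win_avg (Lambda_sharp X) X H1 a q - win_avg (Lambda_sharp X) X H2 a q\<bar>
              \<le> C * exp (- (ln X powr (1/10)))" by (rule part_i)
next
  show "\<forall>k::nat. k \<ge> 2 \<longrightarrow>
          (\<exists>C::real. \<forall>X H1 H2 :: real. \<forall>a q :: nat.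
            X \<ge> H2 \<and> H2 \<ge> H1 \<and> H1 \<ge> X powr (1/4) \<and> X powr (1/4) \<ge> 2 \<and> a \<ge> 1 \<and> q \<ge> 1 \<longrightarrow>
            \<bar>win_avg (dk_sharp k X) X H1 a q - win_avg (dk_sharp k X) X H2 a q\<bar>
              \<le> C * (X powr (-1/100) + H2 / X * (ln X) ^ (k - 2)))"
  proof (intro allI impI)
    fix k :: nat assume k2: "k \<ge> 2"
    show "\<exists>C::real. \<forall>X H1 H2 :: real. \<forall>a q :: nat.
            X \<ge> H2 \<and> H2 \<ge> H1 \<and> H1 \<ge> X powr (1/4) \<and> X powr (1/4) \<ge> 2 \<and> a \<ge> 1 \<and> q \<ge> 1 \<longrightarrow>
            \<bar>win_avg (dk_sharp k X) X H1 a q - win_avg (dk_sharp k X) X H2 a q\<bar>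
              \<le> C * (X powr (-1/100) + H2 / X * (ln X) ^ (k - 2))"
      by (intro exI[of _ "4 * (20 * real k) ^ k * 4 ^ k"] allI impI part_ii_fixed[OF k2])
  qed
qed

end
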